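(* Let $H$ be a strictly balanced graph, $c>0$, $h_0>0$, and let $p(m)$ satisfy $m\,p(m)^{k(H)}\to c$ as $m\to\infty$. Let $H_m=\mathcal{T}(H,G(m,p(m)))$, set $\mu=c^{v(H)}/|\mathrm{Aut}(H)|$ and assume $\mu\ge h_0$. Let $Z_\mu\sim\mathrm{Poisson}(\mu)$ and let $\lambda^{\circ}$ be the unique real root of $\lambda\mapsto\mathbb{E}[(Z_\mu-h_0)e^{-\lambda(Z_\mu-h_0)}]$ (namely $\lambda^{\circ}=\log(\mu/h_0)\ge 0$). Let $\lambda_m$ be the unique real root of $\lambda\mapsto\mathbb{E}[(H_m-h_0)e^{-\lambda(H_m-h_0)}]$. Then $|\lambda_m-\lambda^{\circ}|\to 0$ as $m\to\infty$.
   Context: $v(H),e(H)$ are the numbers of vertices and edges of $H$; $k(H)=\max\{e(F)/v(F): F\subseteq H,\ e(F)\ge1\}$; $H$ is strictly balanced if $e(H)/v(H)>e(F)/v(F)$ for every proper subgraph $F$ of $H$ with at least one edge. $\mathcal{T}(H,G)=\mathrm{inj}(H,G)/|\mathrm{Aut}(H)|$ is the number of unlabelled copies of $H$ in $G$, where $\mathrm{inj}(H,G)$ counts injective edge-preserving maps $V(H)\to V(G)$ and $\mathrm{Aut}(H)$ is the automorphism group. $G(m,p)$ is the Erdős–Rényi random graph on $m$ vertices with edge probability $p$. *)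

theory Defs
  imports "HOL-Analysis.Analysis" "HOL-Probability.Probability" "HOL-Library.FuncSet"
begin

definition simple_graph :: "'a set \<Rightarrow> 'a set set \<Rightarrow> bool" where
  "simple_graph V E \<longleftrightarrow> finite V \<and> (\<forall>e\<in>E. e \<subseteq> V \<and> card e = 2)"

definition subgraphs :: "'a set \<Rightarrow> 'a set set \<Rightarrow> ('a set \<times> 'a set set) set" where
  "subgraphs V E = {(W, D). W \<subseteq> V \<and> D \<subseteq> E \<and> (\<forall>e\<in>D. e \<subseteq> W)}"

definition max_density :: "'a set \<Rightarrow> 'a set set \<Rightarrow> real" where
  "max_density V E = Max {real (card D) / real (card W) | W D. (W, D) \<in> subgraphs V E \<and> D \<noteq> {}}"

definition strictly_balanced :: "'a set \<Rightarrow> 'a set set \<Rightarrow> bool" where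
  "strictly_balanced V E \<longleftrightarrow>
     (\<forall>W D. (W, D) \<in> subgraphs V E \<and> D \<noteq> {} \<and> (W, D) \<noteq> (V, E) \<longrightarrow>
        real (card D) / real (card W) < real (card E) / real (card V))"

definition automorphisms :: "'a set \<Rightarrow> 'a set set \<Rightarrow> ('a \<Rightarrow> 'a) set" where
  "automorphisms V E = {f \<in> V \<rightarrow>\<^sub>E V. bij_betw f V V \<and> (\<lambda>e. f ` e) ` E = E}"

definition inj_count :: "'a set \<Rightarrow> 'a set set \<Rightarrow> nat \<Rightarrow> nat set set \<Rightarrow> nat" where
  "inj_count V E m G = card {f \<in> V \<rightarrow>\<^sub>E {..<m}. inj_on f V \<and> (\<forall>e\<in>E. f ` e \<in> G)}"

definition copies :: "'a set \<Rightarrow> 'a set set \<Rightarrow> nat \<Rightarrow> nat set set \<Rightarrow> real" where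
  "copies V E m G = real (inj_count V E m G) / real (card (automorphisms V E))"

definition all_pairs :: "nat \<Rightarrow> nat set set" where
  "all_pairs m = {e. e \<subseteq> {..<m} \<and> card e = 2}"

definition gnp :: "nat \<Rightarrow> real \<Rightarrow> nat set set pmf" where
  "gnp m p = map_pmf (\<lambda>x. {e \<in> all_pairs m. x e})
                     (Pi_pmf (all_pairs m) False (\<lambda>_. bernoulli_pmf p))"

end

theory Submission
  imports Defs
begin


lemma sums_n_pow_fact:
  fixes x :: real
  shows "(\<lambda>n. real n * x ^ n / fact n) sums (x * exp x)"
proof -
  have "(\<lambda>n. x * (x ^ n / fact n)) sums (x * exp x)"
    using exp_converges[of x] by (intro sums_mult) (simp add: divide_inverse mult.commute scaleR_conv_of_real)
  moreover have "(\<lambda>n. real (Suc n) * x ^ Suc n / fact (Suc n)) = (\<lambda>n. x * (x ^ n / fact n))"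
  proof
    fix n
    have "fact (Suc n) = real (Suc n) * (fact n :: real)" by simp
    moreover have "(fact n :: real) > 0" by simp
    ultimately show "real (Suc n) * x ^ Suc n / fact (Suc n) = x * (x ^ n / fact n)"
      by (simp del: of_nat_Suc fact_Suc)
  qed
  ultimately have "(\<lambda>n. real (Suc n) * x ^ Suc n / fact (Suc n)) sums (x * exp x)" by simp
  then show ?thesis using sums_Suc_iff[of "\<lambda>n. real n * x ^ n / fact n"] by simp
qed

lemma sums_pow_fact:
  fixes x :: real
  shows "(\<lambda>n. x ^ n / fact n) sums (exp x)"
  using exp_converges[of x] by (simp add: divide_inverse mult.commute scaleR_conv_of_real)

lemma poisson_expect:
  fixes mu h0 l :: real
  assumes mu: "mu > 0"
  shows "measure_pmf.expectation (poisson_pmf mu) (\<lambda>z. (real z - h0) * exp (- l * (real z - h0)))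
        = exp (l * h0) * exp (-mu) * (mu * exp (-l) * exp (mu * exp (-l)) - h0 * exp (mu * exp (-l)))"
proof -
  define s where "s = exp (-l)"
  define f where "f = (\<lambda>n::nat. pmf (poisson_pmf mu) n * ((real n - h0) * exp (- l * (real n - h0))))"
  have f_eq: "f n = exp (l*h0) * exp (-mu) * (real n * (mu * s) ^ n / fact n - h0 * ((mu * s) ^ n / fact n))" for n
  proof -
    have "exp (- l * (real n - h0)) = exp (l*h0) * s ^ n"
      by (simp add: s_def exp_of_nat_mult[symmetric] algebra_simps flip: exp_add)
    then show ?thesis using mu by (simp add: f_def power_mult_distrib field_simps)
  qed
  have sm: "f sums (exp (l * h0) * exp (-mu) * (mu * s * exp (mu * s) - h0 * exp (mu * s)))"
    unfolding f_eq
    by (intro sums_mult sums_diff sums_n_pow_fact sums_pow_fact)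
  have "summable (\<lambda>n. norm (f n))"
  proof -
    have "(\<lambda>n. exp (l*h0) * exp (-mu) * (real n * (mu * s) ^ n / fact n + \<bar>h0\<bar> * ((mu * s) ^ n / fact n))) sums
           (exp (l * h0) * exp (-mu) * (mu * s * exp (mu * s) + \<bar>h0\<bar> * exp (mu * s)))"
      by (intro sums_mult sums_add sums_n_pow_fact sums_pow_fact)
    then have S: "summable (\<lambda>n. exp (l*h0) * exp (-mu) * (real n * (mu * s) ^ n / fact n + \<bar>h0\<bar> * ((mu * s) ^ n / fact n)))"
      by (rule sums_summable)
    have B: "norm (f n) \<le> exp (l*h0) * exp (-mu) * (real n * (mu * s) ^ n / fact n + \<bar>h0\<bar> * ((mu * s) ^ n / fact n))" for n
    proof -
      have s0: "s > 0" by (simp add: s_def)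
      have "\<bar>real n * (mu * s) ^ n / fact n - h0 * ((mu * s) ^ n / fact n)\<bar> \<le> real n * (mu * s) ^ n / fact n + \<bar>h0\<bar> * ((mu * s) ^ n / fact n)"
        using mu s0 by (intro order.trans[OF abs_triangle_ineq4]) (simp add: abs_mult)
      then show ?thesis unfolding f_eq by (simp add: abs_mult)
    qed
    show ?thesis by (rule summable_comparison_test'[OF S, where N=0]) (use B in simp)
  qed
  then have int: "integrable (count_space UNIV) f" by (simp add: integrable_count_space_nat_iff)
  have "measure_pmf.expectation (poisson_pmf mu) (\<lambda>z. (real z - h0) * exp (- l * (real z - h0)))
      = integral\<^sup>L (count_space UNIV) f"
    unfolding measure_pmf_eq_density f_def
    by (subst integral_density) auto
  also have "\<dots> = (\<Sum>n. f n)" using int by (rule integral_count_space_nat)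
  also have "\<dots> = exp (l * h0) * exp (-mu) * (mu * s * exp (mu * s) - h0 * exp (mu * s))"
    using sm by (rule sums_unique[symmetric])
  finally show ?thesis by (simp add: s_def)
qed


lemma pascal_sum:
  fixes t :: real
  shows "(\<Sum>j<Suc R. real (Suc n choose j) * t ^ j) =
         (\<Sum>j<Suc R. real (n choose j) * t ^ j) + t * (\<Sum>j<R. real (n choose j) * t ^ j)"
  by (induction R) (simp_all add: algebra_simps)

lemma rem_bound:
  fixes t :: real
  assumes t: "-1 \<le> t" "t \<le> 0"
  shows "\<bar>(1+t)^n - (\<Sum>j<R. real (n choose j) * t^j)\<bar> \<le> \<bar>t\<bar>^R * real (n choose R)"
proof (induction n arbitrary: R)
  case 0
  then show ?case by (cases R) (simp_all add: sum.lessThan_Suc_shift del: sum.lessThan_Suc)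
next
  case (Suc n)
  show ?case
  proof (cases R)
    case 0
    have "\<bar>(1+t)^Suc n\<bar> \<le> 1" using t
    proof -
      have "0 \<le> 1+t" "1+t \<le> 1" using t by auto
      then have a: "(1+t)^Suc n \<le> 1" by (intro power_le_one)
      have b: "0 \<le> (1+t)^Suc n" using \<open>0 \<le> 1+t\<close> by (intro zero_le_power)
      show ?thesis using a b by linarith
    qed
    then show ?thesis using 0 by simp
  next
    case (Suc R')
    define A where "A = (\<lambda>R. (\<Sum>j<R. real (n choose j) * t^j))"
    have AS: "A (Suc R') = A R' + real (n choose R') * t ^ R'" by (simp add: A_def)
    have "(1+t)^Suc n - (\<Sum>j<Suc R'. real (Suc n choose j) * t^j)
        = (1+t) * ((1+t)^n - A (Suc R')) + real (n choose R') * t ^ Suc R'"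
      unfolding pascal_sum by (simp add: A_def algebra_simps)
    also have "\<bar>\<dots>\<bar> \<le> (1+t) * \<bar>(1+t)^n - A (Suc R')\<bar> + real (n choose R') * \<bar>t\<bar> ^ Suc R'"
      using t by (intro order.trans[OF abs_triangle_ineq]) (simp add: abs_mult power_abs)
    also have "\<dots> \<le> 1 * (\<bar>t\<bar>^Suc R' * real (n choose Suc R')) + real (n choose R') * \<bar>t\<bar> ^ Suc R'"
    proof -
      have "(1+t) * \<bar>(1+t)^n - A (Suc R')\<bar> \<le> 1 * (\<bar>t\<bar>^Suc R' * real (n choose Suc R'))"
        using Suc.IH[of "Suc R'"] t unfolding A_def by (intro mult_mono) auto
      then show ?thesis by linarith
    qed
    also have "\<dots> = \<bar>t\<bar>^Suc R' * real (Suc n choose Suc R')" by (simp add: algebra_simps)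
    finally show ?thesis using Suc by simp
  qed
qed

lemma rem_bound2:
  fixes t :: real
  assumes t: "-1 \<le> t" "t \<le> 0"
  shows "\<bar>real n * (1+t)^(n-1) - (\<Sum>j<R. (real (Suc j) * real (n choose Suc j)) * t^j)\<bar>
          \<le> \<bar>t\<bar>^R * (real (Suc R) * real (n choose Suc R))"
proof (cases n)
  case 0
  then show ?thesis by simp
next
  case (Suc n')
  have eq: "real (Suc j) * real (Suc n' choose Suc j) = real (Suc n') * real (n' choose j)" for j
    using Suc_times_binomial_eq[of n' j] by (metis of_nat_mult mult.commute)
  have "\<bar>real n * (1+t)^(n-1) - (\<Sum>j<R. (real (Suc j) * real (n choose Suc j)) * t^j)\<bar>
      = real (Suc n') * \<bar>(1+t)^n' - (\<Sum>j<R. real (n' choose j) * t^j)\<bar>"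
  proof -
    have "real n * (1+t)^(n-1) - (\<Sum>j<R. (real (Suc j) * real (n choose Suc j)) * t^j)
        = real (Suc n') * ((1+t)^n' - (\<Sum>j<R. real (n' choose j) * t^j))"
      unfolding Suc eq by (simp add: sum_distrib_left right_diff_distrib mult.assoc)
    then show ?thesis by (simp add: abs_mult)
  qed
  also have "\<dots> \<le> real (Suc n') * (\<bar>t\<bar>^R * real (n' choose R))"
    using rem_bound[OF t] by (intro mult_left_mono) auto
  also have "\<dots> = \<bar>t\<bar>^R * (real (Suc R) * real (n choose Suc R))"
    unfolding Suc eq by simp
  finally show ?thesis .
qed

lemma series_approx_limit:
  fixes u :: "nat \<Rightarrow> real" and b :: "nat \<Rightarrow> nat \<Rightarrow> real" and be :: "nat \<Rightarrow> real" and t L :: real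
  assumes lim: "\<And>j. (\<lambda>m. b m j) \<longlonglongrightarrow> be j"
    and bnd: "\<And>m R. \<bar>u m - (\<Sum>j<R. t^j * b m j)\<bar> \<le> \<bar>t\<bar>^R * b m R"
    and ser: "(\<lambda>R. \<Sum>j<R. t^j * be j) \<longlonglongrightarrow> L"
    and tail: "(\<lambda>R. \<bar>t\<bar>^R * be R) \<longlonglongrightarrow> 0"
  shows "u \<longlonglongrightarrow> L"
proof (rule tendstoI)
  fix e :: real assume e: "e > 0"
  have "eventually (\<lambda>R. dist (\<Sum>j<R. t^j * be j) L < e/4) sequentially"
    using ser e by (intro tendstoD) auto
  moreover have "eventually (\<lambda>R. dist (\<bar>t\<bar>^R * be R) 0 < e/4) sequentially"
    using tail e by (intro tendstoD) auto
  ultimately obtain R where R1: "dist (\<Sum>j<R. t^j * be j) L < e/4"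
      and R2: "dist (\<bar>t\<bar>^R * be R) 0 < e/4"
    by (metis (mono_tags, lifting) eventually_sequentially order.refl eventually_conj_iff)
  have l1: "(\<lambda>m. \<Sum>j<R. t^j * b m j) \<longlonglongrightarrow> (\<Sum>j<R. t^j * be j)"
    by (intro tendsto_intros lim)
  have l2: "(\<lambda>m. \<bar>t\<bar>^R * b m R) \<longlonglongrightarrow> \<bar>t\<bar>^R * be R"
    by (intro tendsto_intros lim)
  have "eventually (\<lambda>m. dist (\<Sum>j<R. t^j * b m j) (\<Sum>j<R. t^j * be j) < e/4) sequentially"
    using l1 e by (intro tendstoD) auto
  moreover have "eventually (\<lambda>m. dist (\<bar>t\<bar>^R * b m R) (\<bar>t\<bar>^R * be R) < e/4) sequentially"
    using l2 e by (intro tendstoD) auto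
  ultimately show "eventually (\<lambda>m. dist (u m) L < e) sequentially"
  proof eventually_elim
    case (elim m)
    have "\<bar>u m - (\<Sum>j<R. t^j * b m j)\<bar> \<le> \<bar>t\<bar>^R * b m R" by (rule bnd)
    then show ?case using elim R1 R2 unfolding dist_real_def by linarith
  qed
qed


lemma sums_pow_fact':
  fixes x :: real
  shows "(\<lambda>n. x ^ n / fact n) sums (exp x)"
  using exp_converges[of x] by (simp add: divide_inverse mult.commute scaleR_conv_of_real)

lemma exp_tail_zero:
  fixes x :: real
  shows "(\<lambda>R. x ^ R / fact R) \<longlonglongrightarrow> 0"
  using sums_pow_fact'[of x] by (intro summable_LIMSEQ_zero sums_summable)

lemma gen_fun_limit:
  fixes A :: "nat \<Rightarrow> 'b set" and w :: "nat \<Rightarrow> 'b \<Rightarrow> real" and Y :: "nat \<Rightarrow> 'b \<Rightarrow> nat"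
    and mu s :: real
  assumes fin: "\<And>m. finite (A m)" and w: "\<And>m x. x \<in> A m \<Longrightarrow> w m x \<ge> 0"
    and mom: "\<And>r. (\<lambda>m. \<Sum>x\<in>A m. w m x * real (Y m x choose r)) \<longlonglongrightarrow> mu^r / fact r"
    and s: "0 \<le> s" "s \<le> 1"
  shows "(\<lambda>m. \<Sum>x\<in>A m. w m x * s ^ Y m x) \<longlonglongrightarrow> exp (mu*(s-1))"
    and "(\<lambda>m. \<Sum>x\<in>A m. w m x * (real (Y m x) * s ^ Y m x)) \<longlonglongrightarrow> mu * s * exp (mu*(s-1))"
proof -
  define t where "t = s - 1"
  have t: "-1 \<le> t" "t \<le> 0" using s by (auto simp: t_def)
  have st: "s = 1 + t" by (simp add: t_def)
  have ser: "(\<lambda>R. \<Sum>j<R. t^j * (mu^j / fact j)) \<longlonglongrightarrow> exp (mu*t)"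
  proof -
    have "(\<lambda>j. (mu*t)^j / fact j) sums exp (mu*t)" by (rule sums_pow_fact')
    then show ?thesis by (simp add: sums_def power_mult_distrib mult.commute)
  qed
  have tail: "(\<lambda>R. \<bar>t\<bar>^R * (mu^R / fact R)) \<longlonglongrightarrow> 0"
    using exp_tail_zero[of "mu * \<bar>t\<bar>"] by (simp add: power_mult_distrib mult.commute)
  show "(\<lambda>m. \<Sum>x\<in>A m. w m x * s ^ Y m x) \<longlonglongrightarrow> exp (mu*(s-1))"
  proof -
    have "(\<lambda>m. \<Sum>x\<in>A m. w m x * s ^ Y m x) \<longlonglongrightarrow> exp (mu*t)"
    proof (rule series_approx_limit[OF mom _ ser tail])
      fix m R
      have "\<bar>(\<Sum>x\<in>A m. w m x * s ^ Y m x) - (\<Sum>j<R. t^j * (\<Sum>x\<in>A m. w m x * real (Y m x choose j)))\<bar>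
          = \<bar>\<Sum>x\<in>A m. w m x * ((1+t) ^ Y m x - (\<Sum>j<R. real (Y m x choose j) * t^j))\<bar>"
        by (simp add: st sum_distrib_left sum_subtractf right_diff_distrib sum.swap[of _ "{..<R}"] mult_ac)
      also have "\<dots> \<le> (\<Sum>x\<in>A m. \<bar>w m x * ((1+t) ^ Y m x - (\<Sum>j<R. real (Y m x choose j) * t^j))\<bar>)"
        by (rule sum_abs)
      also have "\<dots> \<le> (\<Sum>x\<in>A m. w m x * (\<bar>t\<bar>^R * real (Y m x choose R)))"
        using w rem_bound[OF t] by (intro sum_mono) (simp add: abs_mult mult_left_mono)
      also have "\<dots> = \<bar>t\<bar>^R * (\<Sum>x\<in>A m. w m x * real (Y m x choose R))"
        by (simp add: sum_distrib_left mult_ac)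
      finally show "\<bar>(\<Sum>x\<in>A m. w m x * s ^ Y m x) - (\<Sum>j<R. t^j * (\<Sum>x\<in>A m. w m x * real (Y m x choose j)))\<bar>
          \<le> \<bar>t\<bar>^R * (\<Sum>x\<in>A m. w m x * real (Y m x choose R))" .
    qed
    then show ?thesis by (simp add: t_def)
  qed
  show "(\<lambda>m. \<Sum>x\<in>A m. w m x * (real (Y m x) * s ^ Y m x)) \<longlonglongrightarrow> mu * s * exp (mu*(s-1))"
  proof -
    define b where "b = (\<lambda>m j. real (Suc j) * (\<Sum>x\<in>A m. w m x * real (Y m x choose Suc j)))"
    have blim: "(\<lambda>m. b m j) \<longlonglongrightarrow> mu * (mu^j / fact j)" for j
    proof -
      have "(\<lambda>m. b m j) \<longlonglongrightarrow> real (Suc j) * (mu ^ Suc j / fact (Suc j))"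
        unfolding b_def by (intro tendsto_intros mom)
      also have "real (Suc j) * (mu ^ Suc j / fact (Suc j)) = mu * (mu^j / fact j)"
        by (simp add: field_simps del: of_nat_Suc)
      finally show ?thesis .
    qed
    have ser2: "(\<lambda>R. \<Sum>j<R. t^j * (mu * (mu^j / fact j))) \<longlonglongrightarrow> mu * exp (mu*t)"
    proof -
      have "(\<lambda>R. mu * (\<Sum>j<R. t^j * (mu^j / fact j))) \<longlonglongrightarrow> mu * exp (mu*t)"
        by (intro tendsto_intros ser)
      then show ?thesis by (simp add: sum_distrib_left mult_ac)
    qed
    have tail2: "(\<lambda>R. \<bar>t\<bar>^R * (mu * (mu^R / fact R))) \<longlonglongrightarrow> 0"
    proof -
      have "(\<lambda>R. mu * (\<bar>t\<bar>^R * (mu^R / fact R))) \<longlonglongrightarrow> mu * 0"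
        by (intro tendsto_intros tail)
      then show ?thesis by (simp add: mult_ac)
    qed
    have main: "(\<lambda>m. \<Sum>x\<in>A m. w m x * (real (Y m x) * (1+t) ^ (Y m x - 1))) \<longlonglongrightarrow> mu * exp (mu*t)"
    proof (rule series_approx_limit[OF blim _ ser2 tail2])
      fix m R
      have "\<bar>(\<Sum>x\<in>A m. w m x * (real (Y m x) * (1+t) ^ (Y m x - 1))) - (\<Sum>j<R. t^j * b m j)\<bar>
          = \<bar>\<Sum>x\<in>A m. w m x * (real (Y m x) * (1+t) ^ (Y m x - 1) - (\<Sum>j<R. (real (Suc j) * real (Y m x choose Suc j)) * t^j))\<bar>"
        by (simp add: b_def sum_distrib_left sum_subtractf right_diff_distrib sum.swap[of _ "{..<R}"] mult_ac)
      also have "\<dots> \<le> (\<Sum>x\<in>A m. \<bar>w m x * (real (Y m x) * (1+t) ^ (Y m x - 1) - (\<Sum>j<R. (real (Suc j) * real (Y m x choose Suc j)) * t^j))\<bar>)"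
        by (rule sum_abs)
      also have "\<dots> \<le> (\<Sum>x\<in>A m. w m x * (\<bar>t\<bar>^R * (real (Suc R) * real (Y m x choose Suc R))))"
        using w rem_bound2[OF t] by (intro sum_mono) (simp add: abs_mult mult_left_mono)
      also have "\<dots> = \<bar>t\<bar>^R * b m R"
        by (simp add: b_def sum_distrib_left mult_ac)
      finally show "\<bar>(\<Sum>x\<in>A m. w m x * (real (Y m x) * (1+t) ^ (Y m x - 1))) - (\<Sum>j<R. t^j * b m j)\<bar>
          \<le> \<bar>t\<bar>^R * b m R" .
    qed
    have "(\<lambda>m. s * (\<Sum>x\<in>A m. w m x * (real (Y m x) * (1+t) ^ (Y m x - 1)))) \<longlonglongrightarrow> s * (mu * exp (mu*t))"
      by (intro tendsto_intros main)
    moreover have "s * (\<Sum>x\<in>A m. w m x * (real (Y m x) * (1+t) ^ (Y m x - 1))) = (\<Sum>x\<in>A m. w m x * (real (Y m x) * s ^ Y m x))" for m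
    proof -
      have e: "s * (ww * (real n * s ^ (n - 1))) = ww * (real n * s ^ n)" for ww n
        by (cases n) auto
      show ?thesis unfolding st[symmetric] sum_distrib_left e ..
    qed
    ultimately show ?thesis by (simp add: t_def mult_ac)
  qed
qed


locale SB =
  fixes V :: "'a set" and E :: "'a set set"
  assumes H: "simple_graph V E" and ne: "E \<noteq> {}" and sb: "strictly_balanced V E"
begin

definition "vv = card V"
definition "ee = card E"
definition "kk = real ee / real vv"

lemma finV: "finite V" using H by (simp add: simple_graph_def)
lemma edge_sub: "e \<in> E \<Longrightarrow> e \<subseteq> V" using H by (simp add: simple_graph_def)
lemma edge_card: "e \<in> E \<Longrightarrow> card e = 2" using H by (simp add: simple_graph_def)
lemma edge_fin: "e \<in> E \<Longrightarrow> finite e" using edge_sub finV finite_subset by blast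
lemma edge_ne: "e \<in> E \<Longrightarrow> e \<noteq> {}" using edge_card by fastforce
lemma finE: "finite E"
proof -
  have "E \<subseteq> Pow V" using edge_sub by auto
  then show ?thesis using finV finite_subset by blast
qed

lemma ee_pos: "ee > 0" using finE ne by (simp add: ee_def card_gt_0_iff)

lemma sub_card_pos:
  assumes "(W, D) \<in> subgraphs V E" "D \<noteq> {}"
  shows "card W > 0"
proof -
  from assms obtain d where d: "d \<in> D" by auto
  with assms have "d \<subseteq> W" "d \<in> E" by (auto simp: subgraphs_def)
  moreover have "finite W" using assms finV finite_subset by (auto simp: subgraphs_def)
  ultimately show ?thesis using edge_ne[of d] by (auto simp: card_gt_0_iff)
qed

lemma vv_pos: "vv > 0"
  using sub_card_pos[of V E] ne by (auto simp: subgraphs_def vv_def edge_sub)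

lemma kk_pos: "kk > 0" using ee_pos vv_pos by (simp add: kk_def)

lemma ee_kk: "real ee = kk * real vv" using vv_pos by (simp add: kk_def)

lemma sub_fin:
  assumes "(W, D) \<in> subgraphs V E"
  shows "finite W" "finite D"
  using assms finV finE finite_subset by (auto simp: subgraphs_def)

lemma density_le:
  assumes "(W, D) \<in> subgraphs V E"
  shows "real (card D) \<le> kk * real (card W)"
proof (cases "D = {}")
  case True then show ?thesis using kk_pos by simp
next
  case False
  have cW: "card W > 0" using sub_card_pos[OF assms False] .
  show ?thesis
  proof (cases "(W, D) = (V, E)")
    case True then show ?thesis using ee_kk by (simp add: ee_def vv_def)
  next
    case False2: False
    have "real (card D) / real (card W) < real (card E) / real (card V)"
      using sb assms False False2 unfolding strictly_balanced_def by blast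
    then show ?thesis using cW by (simp add: kk_def ee_def vv_def field_simps)
  qed
qed

lemma density_less:
  assumes "(W, D) \<in> subgraphs V E" "D \<noteq> {}" "(W, D) \<noteq> (V, E)"
  shows "real (card D) < kk * real (card W)"
proof -
  have cW: "card W > 0" using sub_card_pos[OF assms(1,2)] .
  have "real (card D) / real (card W) < real (card E) / real (card V)"
    using sb assms unfolding strictly_balanced_def by blast
  then show ?thesis using cW by (simp add: kk_def ee_def vv_def field_simps)
qed

lemma Union_E: "\<Union>E = V"
proof (rule ccontr)
  assume "\<Union>E \<noteq> V"
  then obtain w where w: "w \<in> V" "w \<notin> \<Union>E" using edge_sub by blast
  have sg: "(V - {w}, E) \<in> subgraphs V E" using w edge_sub by (auto simp: subgraphs_def)
  have "real (card E) < kk * real (card (V - {w}))"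
    using density_less[OF sg ne] w by auto
  moreover have "card (V - {w}) < card V" using w finV by (meson card_Diff1_less)
  ultimately have "real ee < kk * real vv"
    using kk_pos by (smt (verit, ccfv_SIG) ee_def mult_less_cancel_left_pos of_nat_less_iff vv_def)
  then show False by (simp add: ee_kk)
qed

definition "Psi W D = real (card W) - real (card D) / kk"

lemma Psi_nonneg: "(W, D) \<in> subgraphs V E \<Longrightarrow> Psi W D \<ge> 0"
  using density_le[of W D] kk_pos by (simp add: Psi_def field_simps)

definition "SubP = {(W, D). (W, D) \<in> subgraphs V E \<and> W \<noteq> {} \<and> (W, D) \<noteq> (V, E)}"
definition "delta = Min ((\<lambda>(W, D). Psi W D) ` SubP)"

lemma subgraphs_fin: "finite (subgraphs V E)"
proof -
  have "subgraphs V E \<subseteq> Pow V \<times> Pow E" by (auto simp: subgraphs_def)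
  moreover have "finite (Pow V \<times> Pow E)" using finV finE by simp
  ultimately show ?thesis by (rule finite_subset)
qed

lemma SubP_fin: "finite SubP"
proof -
  have "SubP \<subseteq> subgraphs V E" by (auto simp: SubP_def)
  then show ?thesis using subgraphs_fin by (rule finite_subset)
qed

lemma SubP_ne: "SubP \<noteq> {}"
proof -
  have "V \<noteq> {}" using vv_pos by (auto simp: vv_def)
  then have "(V, {}) \<in> SubP" using ne by (auto simp: SubP_def subgraphs_def)
  then show ?thesis by auto
qed

lemma Psi_pos: "(W, D) \<in> SubP \<Longrightarrow> Psi W D > 0"
proof -
  assume a: "(W, D) \<in> SubP"
  then have sg: "(W, D) \<in> subgraphs V E" and W: "W \<noteq> {}" and nv: "(W, D) \<noteq> (V, E)"
    by (auto simp: SubP_def)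
  show ?thesis
  proof (cases "D = {}")
    case True
    then show ?thesis using W sub_fin[OF sg] by (simp add: Psi_def card_gt_0_iff)
  next
    case False
    then show ?thesis using density_less[OF sg False nv] kk_pos by (simp add: Psi_def field_simps)
  qed
qed

lemma delta_pos: "delta > 0"
  unfolding delta_def using SubP_fin SubP_ne Psi_pos by (subst Min_gr_iff) auto

lemma delta_le: "(W, D) \<in> subgraphs V E \<Longrightarrow> W \<noteq> {} \<Longrightarrow> (W, D) \<noteq> (V, E) \<Longrightarrow> delta \<le> Psi W D"
  unfolding delta_def using SubP_fin by (intro Min_le) (auto simp: SubP_def)

lemma no_split:
  assumes "E1 \<union> E2 = E" "E1 \<inter> E2 = {}" "E1 \<noteq> {}" "E2 \<noteq> {}" "\<Union>E1 \<inter> \<Union>E2 = {}"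
  shows False
proof -
  have s1: "(\<Union>E1, E1) \<in> subgraphs V E" using assms(1) edge_sub by (auto simp: subgraphs_def)
  have s2: "(\<Union>E2, E2) \<in> subgraphs V E" using assms(1) edge_sub by (auto simp: subgraphs_def)
  have n1: "(\<Union>E1, E1) \<noteq> (V, E)" using assms by auto
  have n2: "(\<Union>E2, E2) \<noteq> (V, E)" using assms by auto
  have "real (card E1) + real (card E2) < kk * real (card (\<Union>E1)) + kk * real (card (\<Union>E2))"
    using density_less[OF s1 assms(3) n1] density_less[OF s2 assms(4) n2] by linarith
  moreover have "card E = card E1 + card E2"
    using assms finE by (metis card_Un_disjoint finite_Un)
  moreover have "card V = card (\<Union>E1) + card (\<Union>E2)"
  proof -
    have "V = \<Union>E1 \<union> \<Union>E2" using Union_E assms(1) by auto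
    moreover have "finite (\<Union>E1)" "finite (\<Union>E2)" using sub_fin s1 s2 by auto
    ultimately show ?thesis using assms(5) by (simp add: card_Un_disjoint)
  qed
  ultimately show False using ee_kk by (simp add: ee_def vv_def distrib_left)
qed

lemma max_density_eq: "max_density V E = kk"
proof -
  define S where "S = {real (card D) / real (card W) | W D. (W, D) \<in> subgraphs V E \<and> D \<noteq> {}}"
  have "S \<subseteq> (\<lambda>(W, D). real (card D) / real (card W)) ` (subgraphs V E)"
    unfolding S_def by (auto simp: image_iff)
  then have fS: "finite S" using subgraphs_fin finite_subset by blast
  have VE: "(V, E) \<in> subgraphs V E" using edge_sub by (auto simp: subgraphs_def)
  have inS: "kk \<in> S" unfolding S_def kk_def ee_def vv_def
    using ne VE by blast
  have le: "x \<le> kk" if "x \<in> S" for x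
  proof -
    from that obtain W D where x: "x = real (card D) / real (card W)" and sg: "(W, D) \<in> subgraphs V E" "D \<noteq> {}"
      by (auto simp: S_def)
    have "card W > 0" using sub_card_pos sg by auto
    then show ?thesis using density_le[OF sg(1)] x by (simp add: divide_le_eq mult.commute)
  qed
  show ?thesis unfolding max_density_def S_def[symmetric]
    using fS inS le by (intro Max_eqI) auto
qed

end


context SB begin

definition Inj :: "nat \<Rightarrow> ('a \<Rightarrow> nat) set" where "Inj m = {f \<in> V \<rightarrow>\<^sub>E {..<m}. inj_on f V}"
definition Phi :: "('a \<Rightarrow> nat) \<Rightarrow> nat set set" where "Phi f = (\<lambda>e. f ` e) ` E"
definition Cop :: "nat \<Rightarrow> nat set set set" where "Cop m = Phi ` Inj m"
definition "aut = card (automorphisms V E)"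

lemma Phi_inj: "inj_on f V \<Longrightarrow> inj_on ((`) f) E"
  by (rule inj_on_image) (simp add: Union_E)

lemma card_Phi: "inj_on f V \<Longrightarrow> card (Phi f) = ee"
  unfolding Phi_def ee_def by (rule card_image[OF Phi_inj])

lemma Union_Phi: "\<Union>(Phi f) = f ` V"
  unfolding Phi_def using Union_E by auto

lemma card_img: "inj_on f V \<Longrightarrow> card (f ` V) = vv"
  by (simp add: card_image vv_def)

lemma fin_Phi: "finite (Phi f)" unfolding Phi_def using finE by simp

lemma Phi_pairs: "f \<in> Inj m \<Longrightarrow> Phi f \<subseteq> all_pairs m"
proof
  fix d assume f: "f \<in> Inj m" and d: "d \<in> Phi f"
  then obtain e where e: "e \<in> E" "d = f ` e" by (auto simp: Phi_def)
  have "inj_on f e" using f edge_sub[OF e(1)] by (auto simp: Inj_def intro: inj_on_subset)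
  then have "card d = 2" using e edge_card by (simp add: card_image)
  moreover have "d \<subseteq> {..<m}" using f e edge_sub[OF e(1)] by (auto simp: Inj_def)
  ultimately show "d \<in> all_pairs m" by (simp add: all_pairs_def)
qed

lemma Phi_ne: "d \<in> Phi f \<Longrightarrow> d \<noteq> {}"
  using edge_ne by (auto simp: Phi_def)

lemma Cop_props:
  assumes "S \<in> Cop m"
  shows "finite S" "card S = ee" "card (\<Union>S) = vv" "S \<subseteq> all_pairs m" "\<Union>S \<subseteq> {..<m}"
proof -
  from assms obtain f where f: "f \<in> Inj m" "S = Phi f" by (auto simp: Cop_def)
  then have inj: "inj_on f V" by (simp add: Inj_def)
  show "finite S" using f fin_Phi by simp
  show "card S = ee" using f card_Phi inj by simp
  show "card (\<Union>S) = vv" unfolding f(2) Union_Phi by (rule card_img[OF inj])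
  show "S \<subseteq> all_pairs m" using f Phi_pairs by simp
  show "\<Union>S \<subseteq> {..<m}" unfolding f(2) Union_Phi using f(1) by (auto simp: Inj_def)
qed

lemma fin_Inj: "finite (Inj m)"
proof -
  have "Inj m \<subseteq> V \<rightarrow>\<^sub>E {..<m}" by (auto simp: Inj_def)
  moreover have "finite (V \<rightarrow>\<^sub>E {..<m})" by (rule finite_PiE[OF finV]) (rule finite_lessThan)
  ultimately show ?thesis by (rule finite_subset)
qed

lemma fin_Cop: "finite (Cop m)" unfolding Cop_def by (intro finite_imageI fin_Inj)

lemma id_aut: "restrict id V \<in> automorphisms V E"
proof -
  have r: "restrict id V ` e = e" if "e \<subseteq> V" for e
  proof -
    have "restrict id V ` e = id ` e" by (rule image_cong) (use that in auto)
    then show ?thesis by simp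
  qed
  have "(\<lambda>e. restrict id V ` e) ` E = (\<lambda>e. e) ` E"
    by (rule image_cong[OF refl]) (metis r edge_sub)
  then have a: "(\<lambda>e. restrict id V ` e) ` E = E" by simp
  have b: "bij_betw (restrict id V) V V" unfolding bij_betw_def
  proof
    show "inj_on (restrict id V) V" by (rule inj_onI) simp
    show "restrict id V ` V = V" by (rule r) simp
  qed
  have c: "restrict id V \<in> V \<rightarrow>\<^sub>E V" by simp
  show ?thesis unfolding automorphisms_def using a b c by blast
qed

lemma fin_aut: "finite (automorphisms V E)"
proof -
  have "automorphisms V E \<subseteq> V \<rightarrow>\<^sub>E V" by (auto simp: automorphisms_def)
  moreover have "finite (V \<rightarrow>\<^sub>E V)" using finV by (simp add: finite_PiE)
  ultimately show ?thesis by (rule finite_subset)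
qed

lemma aut_pos: "aut > 0"
  unfolding aut_def using id_aut fin_aut by (auto simp: card_gt_0_iff)

lemma fiber_card:
  assumes f0: "f0 \<in> Inj m"
  shows "card {f \<in> Inj m. Phi f = Phi f0} = aut"
proof -
  have inj0: "inj_on f0 V" and f0m: "f0 \<in> V \<rightarrow>\<^sub>E {..<m}" using f0 by (auto simp: Inj_def)
  define g where "g = (\<lambda>\<sigma>. restrict (f0 \<circ> \<sigma>) V)"
  define g' where "g' = (\<lambda>f. restrict (\<lambda>x. inv_into V f0 (f x)) V)"
  have "bij_betw g (automorphisms V E) {f \<in> Inj m. Phi f = Phi f0}"
  proof (rule bij_betw_byWitness[where f'=g'])
    show "\<forall>a\<in>automorphisms V E. g' (g a) = a"
    proof
      fix \<sigma> assume s: "\<sigma> \<in> automorphisms V E"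
      then have sV: "\<sigma> \<in> V \<rightarrow>\<^sub>E V" by (simp add: automorphisms_def)
      show "g' (g \<sigma>) = \<sigma>"
      proof (rule ext)
        fix x show "g' (g \<sigma>) x = \<sigma> x"
        proof (cases "x \<in> V")
          case True
          then have "\<sigma> x \<in> V" using sV by auto
          then show ?thesis using True inj0 by (simp add: g_def g'_def inv_into_f_f)
        next
          case False
          then show ?thesis using sV by (simp add: g_def g'_def PiE_def extensional_def)
        qed
      qed
    qed
    show "\<forall>a'\<in>{f \<in> Inj m. Phi f = Phi f0}. g (g' a') = a'"
    proof
      fix f assume f: "f \<in> {f \<in> Inj m. Phi f = Phi f0}"
      then have img: "f ` V = f0 ` V" using Union_Phi by (metis (mono_tags, lifting) mem_Collect_eq)
      have fV: "f \<in> V \<rightarrow>\<^sub>E {..<m}" using f by (simp add: Inj_def)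
      show "g (g' f) = f"
      proof (rule ext)
        fix x show "g (g' f) x = f x"
        proof (cases "x \<in> V")
          case True
          then have "f x \<in> f0 ` V" using img by blast
          then show ?thesis using True by (simp add: g_def g'_def f_inv_into_f)
        next
          case False then show ?thesis using fV by (simp add: g_def PiE_def extensional_def)
        qed
      qed
    qed
    show "g ` automorphisms V E \<subseteq> {f \<in> Inj m. Phi f = Phi f0}"
    proof
      fix h assume "h \<in> g ` automorphisms V E"
      then obtain \<sigma> where s: "\<sigma> \<in> automorphisms V E" and h: "h = g \<sigma>" by auto
      have sV: "\<sigma> \<in> V \<rightarrow>\<^sub>E V" and bs: "bij_betw \<sigma> V V" and sE: "(\<lambda>e. \<sigma> ` e) ` E = E"
        using s by (auto simp: automorphisms_def)
      have "h \<in> V \<rightarrow>\<^sub>E {..<m}" using sV f0m by (auto simp: h g_def)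
      moreover have "inj_on h V"
      proof -
        have "inj_on (f0 \<circ> \<sigma>) V" using bs inj0 by (auto simp: bij_betw_def intro: comp_inj_on)
        then show ?thesis by (simp add: h g_def inj_on_def)
      qed
      moreover have "Phi h = Phi f0"
      proof -
        have "h ` e = f0 ` (\<sigma> ` e)" if "e \<in> E" for e
          using edge_sub[OF that] by (auto simp: h g_def)
        then have "Phi h = (\<lambda>e. f0 ` e) ` ((\<lambda>e. \<sigma> ` e) ` E)"
          unfolding Phi_def by (simp add: image_image cong: image_cong)
        then show ?thesis by (simp add: sE Phi_def)
      qed
      ultimately show "h \<in> {f \<in> Inj m. Phi f = Phi f0}" by (simp add: Inj_def)
    qed
    show "g' ` {f \<in> Inj m. Phi f = Phi f0} \<subseteq> automorphisms V E"
    proof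
      fix \<sigma> assume "\<sigma> \<in> g' ` {f \<in> Inj m. Phi f = Phi f0}"
      then obtain f where f: "f \<in> Inj m" "Phi f = Phi f0" and s: "\<sigma> = g' f" by auto
      have injf: "inj_on f V" using f by (simp add: Inj_def)
      have img: "f ` V = f0 ` V" using f Union_Phi by metis
      have inV: "\<sigma> x \<in> V" if "x \<in> V" for x
      proof -
        have "f x \<in> f0 ` V" using that img by blast
        then show ?thesis using that by (simp add: s g'_def inv_into_into)
      qed
      have f0s: "f0 (\<sigma> x) = f x" if "x \<in> V" for x
      proof -
        have "f x \<in> f0 ` V" using that img by blast
        then show ?thesis using that by (simp add: s g'_def f_inv_into_f)
      qed
      have sV: "\<sigma> \<in> V \<rightarrow>\<^sub>E V" using inV by (auto simp: s g'_def)
      have injs: "inj_on \<sigma> V"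
      proof (rule inj_onI)
        fix x y assume "x \<in> V" "y \<in> V" "\<sigma> x = \<sigma> y"
        then have "f x = f y" using f0s by metis
        then show "x = y" using injf \<open>x \<in> V\<close> \<open>y \<in> V\<close> by (simp add: inj_on_def)
      qed
      have "\<sigma> ` V = V"
        using injs inV finV by (intro card_subset_eq) (auto simp: card_image)
      then have bs: "bij_betw \<sigma> V V" using injs by (simp add: bij_betw_def)
      have sub: "(\<lambda>e. \<sigma> ` e) ` E \<subseteq> E"
      proof
        fix d assume "d \<in> (\<lambda>e. \<sigma> ` e) ` E"
        then obtain e where e: "e \<in> E" "d = \<sigma> ` e" by auto
        have eV: "e \<subseteq> V" using edge_sub[OF e(1)] .
        have "f0 ` d = f ` e" unfolding e(2) image_image using eV f0s by (intro image_cong) auto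
        moreover have "f ` e \<in> Phi f" using e by (auto simp: Phi_def)
        ultimately have "f0 ` d \<in> Phi f0" using f(2) by simp
        then obtain e' where e': "e' \<in> E" "f0 ` d = f0 ` e'" by (auto simp: Phi_def)
        have "d \<subseteq> V" using e eV inV by auto
        then have "d = e'" using e' edge_sub[OF e'(1)] inj0 by (simp add: inj_on_image_eq_iff)
        then show "d \<in> E" using e' by simp
      qed
      have "(\<lambda>e. \<sigma> ` e) ` E = E"
      proof (rule card_subset_eq[OF finE sub])
        have "inj_on ((`) \<sigma>) E" by (rule inj_on_image) (simp add: Union_E injs)
        then show "card ((\<lambda>e. \<sigma> ` e) ` E) = card E" by (simp add: card_image)
      qed
      then show "\<sigma> \<in> automorphisms V E" using sV bs by (simp add: automorphisms_def)
    qed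
  qed
  then show ?thesis unfolding aut_def by (simp add: bij_betw_same_card)
qed

lemma count_fibers:
  assumes "X \<subseteq> Cop m"
  shows "card {f \<in> Inj m. Phi f \<in> X} = aut * card X"
proof -
  define fib where "fib = (\<lambda>S. {f \<in> Inj m. Phi f = S})"
  have eq: "{f \<in> Inj m. Phi f \<in> X} = \<Union>(fib ` X)" by (auto simp: fib_def)
  have finX: "finite X" using assms fin_Cop finite_subset by blast
  have "card (\<Union>(fib ` X)) = (\<Sum>S\<in>X. card (fib S))"
  proof (rule card_UN_disjoint[OF finX])
    show "\<forall>i\<in>X. finite (fib i)" unfolding fib_def using fin_Inj[of m] by auto
    show "\<forall>i\<in>X. \<forall>j\<in>X. i \<noteq> j \<longrightarrow> fib i \<inter> fib j = {}" by (auto simp: fib_def)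
  qed
  also have "\<dots> = (\<Sum>S\<in>X. aut)"
  proof (rule sum.cong[OF refl])
    fix S assume "S \<in> X"
    then obtain f0 where "f0 \<in> Inj m" "S = Phi f0" using assms by (auto simp: Cop_def)
    then show "card (fib S) = aut" using fiber_card by (simp add: fib_def)
  qed
  finally show ?thesis using eq by simp
qed

lemma copies_eq: "copies V E m G = real (card {S \<in> Cop m. S \<subseteq> G})"
proof -
  have "{f \<in> V \<rightarrow>\<^sub>E {..<m}. inj_on f V \<and> (\<forall>e\<in>E. f ` e \<in> G)} = {f \<in> Inj m. Phi f \<in> {S \<in> Cop m. S \<subseteq> G}}"
  proof (rule set_eqI)
    fix f
    have "f \<in> Inj m \<Longrightarrow> Phi f \<in> Cop m" unfolding Cop_def by (rule imageI)
    moreover have "(\<forall>e\<in>E. f ` e \<in> G) \<longleftrightarrow> Phi f \<subseteq> G" unfolding Phi_def by blast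
    ultimately show "f \<in> {f \<in> V \<rightarrow>\<^sub>E {..<m}. inj_on f V \<and> (\<forall>e\<in>E. f ` e \<in> G)} \<longleftrightarrow> f \<in> {f \<in> Inj m. Phi f \<in> {S \<in> Cop m. S \<subseteq> G}}"
      unfolding Inj_def by blast
  qed
  moreover have "card {f \<in> Inj m. Phi f \<in> {S \<in> Cop m. S \<subseteq> G}} = aut * card {S \<in> Cop m. S \<subseteq> G}"
    by (rule count_fibers) auto
  ultimately have "inj_count V E m G = aut * card {S \<in> Cop m. S \<subseteq> G}"
    unfolding inj_count_def by simp
  then have "copies V E m G = real (aut * card {S \<in> Cop m. S \<subseteq> G}) / real aut"
    unfolding copies_def aut_def by simp
  then show ?thesis using aut_pos by simp
qed

lemma card_Inj: "card (Inj m) = prod ((-) m) {0..<vv}"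
proof -
  have "card {f \<in> V \<rightarrow>\<^sub>E {..<m}. inj_on f V} = card {..<m} ^ (card V - card V) * prod ((-) (card {..<m})) {0..<card V}"
    by (rule card_inj_on_subset_funcset[OF finV finite_lessThan subset_refl])
  then show ?thesis unfolding Inj_def vv_def card_lessThan diff_self_eq_0 power_0 mult_1 .
qed

lemma card_Cop: "aut * card (Cop m) = card (Inj m)"
proof -
  have "{f \<in> Inj m. Phi f \<in> Cop m} = Inj m" by (auto simp: Cop_def)
  then show ?thesis using count_fibers[of "Cop m" m] by simp
qed

end


context SB begin

definition WR :: "nat set set set \<Rightarrow> nat set" where "WR R = \<Union>(\<Union>R)"
definition ER :: "nat set set set \<Rightarrow> nat set set" where "ER R = \<Union>R"
definition DisjF :: "nat set set set \<Rightarrow> bool" where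
  "DisjF R \<longleftrightarrow> (\<forall>S\<in>R. \<forall>T\<in>R. S \<noteq> T \<longrightarrow> \<Union>S \<inter> \<Union>T = {})"
definition phi :: "nat set set set \<Rightarrow> real" where
  "phi R = real (card (WR R)) - real (card (ER R)) / kk"

lemma step:
  assumes finW: "finite W" and finD: "finite D" and Dsub: "\<forall>d\<in>D. d \<subseteq> W" and f: "inj_on f V"
  shows "real (card (W \<union> f ` V)) - real (card (D \<union> Phi f)) / kk
          = (real (card W) - real (card D) / kk) - Psi {x\<in>V. f x \<in> W} {e\<in>E. f ` e \<in> D}"
    and "({x\<in>V. f x \<in> W}, {e\<in>E. f ` e \<in> D}) \<in> subgraphs V E"
proof -
  have c1: "card (W \<union> f ` V) + card (W \<inter> f ` V) = card W + vv"
    using card_Un_Int[OF finW finite_imageI[OF finV, of f]] card_img[OF f] by simp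
  have "W \<inter> f ` V = f ` {x\<in>V. f x \<in> W}" by auto
  then have c2: "card (W \<inter> f ` V) = card {x\<in>V. f x \<in> W}"
    using f by (simp add: card_image inj_on_subset[of f V])
  have c3: "card (D \<union> Phi f) + card (D \<inter> Phi f) = card D + ee"
    using card_Un_Int[OF finD fin_Phi[of f]] card_Phi[OF f] by simp
  have "D \<inter> Phi f = (`) f ` {e\<in>E. f ` e \<in> D}" by (auto simp: Phi_def)
  then have c4: "card (D \<inter> Phi f) = card {e\<in>E. f ` e \<in> D}"
    using Phi_inj[OF f] by (simp add: card_image inj_on_subset[of "(`) f" E])
  have kk: "real ee / kk = real vv" using ee_kk kk_pos by simp
  have "real (card (W \<union> f ` V)) = real (card W) + real vv - real (card {x\<in>V. f x \<in> W})"
    using c1 c2 by linarith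
  moreover have "real (card (D \<union> Phi f)) = real (card D) + real ee - real (card {e\<in>E. f ` e \<in> D})"
    using c3 c4 by linarith
  ultimately show "real (card (W \<union> f ` V)) - real (card (D \<union> Phi f)) / kk
          = (real (card W) - real (card D) / kk) - Psi {x\<in>V. f x \<in> W} {e\<in>E. f ` e \<in> D}"
    using kk kk_pos by (simp add: Psi_def diff_divide_distrib add_divide_distrib)
  show "({x\<in>V. f x \<in> W}, {e\<in>E. f ` e \<in> D}) \<in> subgraphs V E"
    using Dsub edge_sub unfolding subgraphs_def by blast
qed

lemma WR_insert: "WR (insert S R) = \<Union>S \<union> WR R" by (auto simp: WR_def)
lemma ER_insert: "ER (insert S R) = S \<union> ER R" by (auto simp: ER_def)

lemma WR_sub:
  assumes R: "R \<subseteq> Cop m"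
  shows "WR R \<subseteq> {..<m}"
proof
  fix x assume "x \<in> WR R"
  then obtain S where S: "S \<in> R" "x \<in> \<Union>S" by (auto simp: WR_def)
  then have "S \<in> Cop m" using R by blast
  then have "\<Union>S \<subseteq> {..<m}" by (rule Cop_props(5))
  then show "x \<in> {..<m}" using S by blast
qed

lemma fin_WR: "R \<subseteq> Cop m \<Longrightarrow> finite (WR R)"
  by (rule finite_subset[OF WR_sub]) auto

lemma fin_ER:
  assumes "finite R" "R \<subseteq> Cop m"
  shows "finite (ER R)"
  unfolding ER_def
proof (rule finite_Union)
  show "finite R" by fact
  fix S assume "S \<in> R"
  then have "S \<in> Cop m" using assms(2) by blast
  then show "finite S" by (rule Cop_props(1))
qed

lemma ER_sub_WR: "\<forall>d\<in>ER R. d \<subseteq> WR R" by (auto simp: ER_def WR_def)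

lemma struct:
  assumes "finite R" "R \<subseteq> Cop m"
  shows "phi R \<le> 0 \<and> (\<not> DisjF R \<longrightarrow> phi R \<le> - delta)"
  using assms
proof (induction R rule: finite_induct)
  case empty
  then show ?case by (simp add: phi_def WR_def ER_def DisjF_def)
next
  case (insert S R)
  have RC: "R \<subseteq> Cop m" and SC: "S \<in> Cop m" using insert by auto
  obtain f where f: "f \<in> Inj m" "S = Phi f" using SC by (auto simp: Cop_def)
  have injf: "inj_on f V" using f by (simp add: Inj_def)
  define W where "W = WR R"
  define D where "D = ER R"
  define A' where "A' = {x\<in>V. f x \<in> W}"
  define B' where "B' = {e\<in>E. f ` e \<in> D}"
  have IH: "phi R \<le> 0" "\<not> DisjF R \<Longrightarrow> phi R \<le> - delta" using insert RC by auto
  have st: "real (card (W \<union> f ` V)) - real (card (D \<union> Phi f)) / kk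
          = (real (card W) - real (card D) / kk) - Psi A' B'"
    and sg: "(A', B') \<in> subgraphs V E"
    using step[OF fin_WR[OF RC] fin_ER[OF insert(1) RC] ER_sub_WR injf]
    unfolding W_def D_def A'_def B'_def by auto
  have phieq: "phi (insert S R) = phi R - Psi A' B'"
  proof -
    have "WR (insert S R) = W \<union> f ` V" using f by (auto simp: WR_insert W_def Union_Phi)
    moreover have "ER (insert S R) = D \<union> Phi f" using f by (auto simp: ER_insert D_def)
    ultimately show ?thesis using st by (simp add: phi_def W_def D_def)
  qed
  have Psi0: "Psi A' B' \<ge> 0" by (rule Psi_nonneg[OF sg])
  have part2: "phi (insert S R) \<le> - delta" if nd: "\<not> DisjF (insert S R)"
  proof (cases "DisjF R")
    case False
    then show ?thesis using IH phieq Psi0 by linarith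
  next
    case dR: True
    from nd obtain X Y where XY: "X \<in> insert S R" "Y \<in> insert S R" "X \<noteq> Y" "\<Union>X \<inter> \<Union>Y \<noteq> {}"
      unfolding DisjF_def by blast
    have "\<exists>T. T \<in> R \<and> T \<noteq> S \<and> \<Union>S \<inter> \<Union>T \<noteq> {}"
    proof (cases "X = S")
      case True then show ?thesis using XY by (intro exI[of _ Y]) auto
    next
      case XS: False
      then have XR: "X \<in> R" using XY by auto
      show ?thesis
      proof (cases "Y = S")
        case True
        have "\<Union>S \<inter> \<Union>X \<noteq> {}" using XY True by (simp add: Int_commute)
        then show ?thesis using XR XS by blast
      next
        case False
        then have "Y \<in> R" using XY by auto
        then have False using XR XY dR unfolding DisjF_def by blast
        then show ?thesis ..
      qed
    qed
    then obtain T where T: "T \<in> R" "T \<noteq> S" "\<Union>S \<inter> \<Union>T \<noteq> {}" by blast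
    have A'ne: "A' \<noteq> {}"
    proof -
      obtain y where "y \<in> \<Union>S" "y \<in> \<Union>T" using T by blast
      then obtain x where "x \<in> V" "f x = y" "y \<in> W"
        using f T(1) by (auto simp: Union_Phi W_def WR_def)
      then show ?thesis by (auto simp: A'_def)
    qed
    have nVE: "(A', B') \<noteq> (V, E)"
    proof
      assume "(A', B') = (V, E)"
      then have BE: "\<forall>e\<in>E. f ` e \<in> D" by (auto simp: B'_def)
      obtain e0 where e0: "e0 \<in> E" using ne by auto
      obtain T0 where T0: "T0 \<in> R" "f ` e0 \<in> T0" using BE e0 by (auto simp: D_def ER_def)
      define E1 where "E1 = {e\<in>E. f ` e \<in> T0}"
      define E2 where "E2 = E - E1"
      have E2e: "E2 = {}"
      proof (rule ccontr)
        assume E2ne: "E2 \<noteq> {}"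
        have "\<Union>E1 \<inter> \<Union>E2 = {}"
        proof (rule ccontr)
          assume "\<Union>E1 \<inter> \<Union>E2 \<noteq> {}"
          then obtain x e1 e2 where x: "x \<in> e1" "e1 \<in> E1" "x \<in> e2" "e2 \<in> E2" by blast
          have "f ` e2 \<in> D" using BE x E2_def by auto
          then obtain T2 where T2: "T2 \<in> R" "f ` e2 \<in> T2" by (auto simp: D_def ER_def)
          have "T2 \<noteq> T0" using T2 x by (auto simp: E1_def E2_def)
          then have "\<Union>T0 \<inter> \<Union>T2 = {}" using dR T0 T2 unfolding DisjF_def by blast
          moreover have "f x \<in> \<Union>T0" using x T0 by (auto simp: E1_def)
          moreover have "f x \<in> \<Union>T2" using x T2 by auto
          ultimately show False by blast
        qed
        moreover have "E1 \<noteq> {}" using e0 T0 by (auto simp: E1_def)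
        ultimately show False
          using no_split[of E1 E2] E2ne by (auto simp: E2_def E1_def)
      qed
      then have "S \<subseteq> T0" using f by (auto simp: Phi_def E1_def E2_def)
      moreover have "card S = card T0"
        using Cop_props(2) SC T0(1) RC by auto
      moreover have "finite T0" using Cop_props(1) T0(1) RC by auto
      ultimately have "S = T0" by (simp add: card_subset_eq)
      then show False using T0(1) insert(2) by simp
    qed
    have "delta \<le> Psi A' B'" using delta_le[OF sg A'ne nVE] .
    then show ?thesis using phieq IH by linarith
  qed
  show ?case using phieq Psi0 IH part2 by linarith
qed

lemma nondisj_bound:
  assumes "finite R" "R \<subseteq> Cop m" "\<not> DisjF R"
  shows "kk * (real (card (WR R)) + delta) \<le> real (card (ER R))"
proof -
  have "phi R \<le> - delta" using struct[OF assms(1,2)] assms(3) by auto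
  then have "real (card (WR R)) + delta \<le> real (card (ER R)) / kk" by (simp add: phi_def)
  then show ?thesis using kk_pos by (simp add: field_simps)
qed

lemma ER_card_le:
  assumes "finite R" "R \<subseteq> Cop m"
  shows "card (ER R) \<le> card R * ee"
proof -
  have "card (ER R) \<le> (\<Sum>S\<in>R. card S)" unfolding ER_def by (rule card_Union_le_sum_card)
  also have "\<dots> = (\<Sum>S\<in>R. ee)"
  proof (rule sum.cong[OF refl])
    fix S assume "S \<in> R" then have "S \<in> Cop m" using assms(2) by blast
    then show "card S = ee" using Cop_props(2) by simp
  qed
  also have "\<dots> = card R * ee" by simp
  finally show ?thesis .
qed

lemma disj_card:
  assumes "finite R" "R \<subseteq> Cop m" "DisjF R"
  shows "card (ER R) = card R * ee"
proof -
  have "card (\<Union>(id ` R)) = (\<Sum>S\<in>R. card (id S))"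
  proof (rule card_UN_disjoint[OF assms(1)])
    show "\<forall>i\<in>R. finite (id i)"
    proof
      fix S assume "S \<in> R" then have "S \<in> Cop m" using assms(2) by blast
      then show "finite (id S)" using Cop_props(1) by simp
    qed
    show "\<forall>i\<in>R. \<forall>j\<in>R. i \<noteq> j \<longrightarrow> id i \<inter> id j = {}"
    proof (intro ballI impI)
      fix S T assume ST: "S \<in> R" "T \<in> R" "S \<noteq> T"
      show "id S \<inter> id T = {}"
      proof (rule ccontr)
        assume "id S \<inter> id T \<noteq> {}"
        then obtain d where d: "d \<in> S" "d \<in> T" by auto
        obtain f where "S = Phi f" using ST assms(2) by (auto simp: Cop_def)
        then have "d \<noteq> {}" using d Phi_ne by blast
        then have "\<Union>S \<inter> \<Union>T \<noteq> {}" using d by blast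
        then show False using assms(3) ST unfolding DisjF_def by blast
      qed
    qed
  qed
  also have "\<dots> = (\<Sum>S\<in>R. ee)"
  proof (rule sum.cong[OF refl])
    fix S assume "S \<in> R" then have "S \<in> Cop m" using assms(2) by blast
    then show "card (id S) = ee" using Cop_props(2) by simp
  qed
  also have "\<dots> = card R * ee" by simp
  finally show ?thesis by (simp add: ER_def)
qed

end


lemma fin_AP: "finite (all_pairs m)"
proof -
  have "all_pairs m \<subseteq> Pow {..<m}" by (auto simp: all_pairs_def)
  then show ?thesis by (rule finite_subset) simp
qed

lemma set_gnp: "set_pmf (gnp m p) \<subseteq> Pow (all_pairs m)"
  by (auto simp: gnp_def)

lemma prob_gnp:
  assumes p: "0 \<le> p" "p \<le> 1" and T: "T \<subseteq> all_pairs m"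
  shows "measure_pmf.prob (gnp m p) {G. T \<subseteq> G} = p ^ card T"
proof -
  define AP where "AP = all_pairs m"
  define B where "B = (\<lambda>e. if e \<in> T then {True} else (UNIV :: bool set))"
  have pre: "(\<lambda>x. {e \<in> AP. x e}) -` {G. T \<subseteq> G} = Pi AP B"
    using T by (auto simp: B_def AP_def Pi_def split: if_splits)
  have "measure_pmf.prob (gnp m p) {G. T \<subseteq> G}
      = measure_pmf.prob (Pi_pmf AP False (\<lambda>_. bernoulli_pmf p)) (Pi AP B)"
    unfolding gnp_def measure_map_pmf AP_def[symmetric] pre ..
  also have "\<dots> = (\<Prod>e\<in>AP. measure_pmf.prob (bernoulli_pmf p) (B e))"
    by (rule measure_Pi_pmf_Pi) (simp add: AP_def fin_AP)
  also have "\<dots> = (\<Prod>e\<in>AP. if e \<in> T then p else 1)"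
    by (intro prod.cong refl) (simp add: B_def measure_pmf_single p)
  also have "\<dots> = p ^ card (AP \<inter> T)"
    using fin_AP[of m] by (simp add: prod.If_cases AP_def Int_def)
  also have "AP \<inter> T = T" using T by (auto simp: AP_def)
  finally show ?thesis .
qed

lemma sum_gnp_indicator:
  shows "(\<Sum>G\<in>Pow (all_pairs m). pmf (gnp m p) G * (if T \<subseteq> G then 1 else 0))
         = measure_pmf.prob (gnp m p) {G. T \<subseteq> G}"
proof -
  have fin: "finite (Pow (all_pairs m))" using fin_AP by simp
  have "(\<Sum>G\<in>Pow (all_pairs m). pmf (gnp m p) G * (if T \<subseteq> G then 1 else 0))
      = (\<Sum>G\<in>{G \<in> Pow (all_pairs m). T \<subseteq> G}. pmf (gnp m p) G)"
  proof -
    have "(\<Sum>G\<in>{G \<in> Pow (all_pairs m). T \<subseteq> G}. pmf (gnp m p) G) = (\<Sum>G\<in>Pow (all_pairs m). if T \<subseteq> G then pmf (gnp m p) G else 0)"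
      by (rule sum.inter_filter[OF fin])
    then show ?thesis by (simp add: if_distrib cong: if_cong)
  qed
  also have "\<dots> = measure_pmf.prob (gnp m p) {G \<in> Pow (all_pairs m). T \<subseteq> G}"
    using fin by (simp add: measure_measure_pmf_finite)
  also have "\<dots> = measure_pmf.prob (gnp m p) {G. T \<subseteq> G}"
  proof (rule measure_prob_cong_0)
    fix x assume "x \<in> {G \<in> Pow (all_pairs m). T \<subseteq> G} - {G. T \<subseteq> G}"
    then show "pmf (gnp m p) x = 0" by auto
  next
    fix x assume "x \<in> {G. T \<subseteq> G} - {G \<in> Pow (all_pairs m). T \<subseteq> G}"
    then have "x \<notin> set_pmf (gnp m p)" using set_gnp by auto
    then show "pmf (gnp m p) x = 0" by (simp add: set_pmf_eq)
  qed
  finally show ?thesis .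
qed

context SB begin

definition Rr :: "nat \<Rightarrow> nat \<Rightarrow> nat set set set set" where
  "Rr m r = {R. R \<subseteq> Cop m \<and> card R = r}"

lemma fin_Rr: "finite (Rr m r)"
proof -
  have "Rr m r \<subseteq> Pow (Cop m)" by (auto simp: Rr_def)
  then show ?thesis by (rule finite_subset) (simp add: fin_Cop)
qed

lemma choose_eq:
  "real (card {S \<in> Cop m. S \<subseteq> G} choose r) = (\<Sum>R\<in>Rr m r. if ER R \<subseteq> G then 1 else 0)"
proof -
  have finX: "finite {S \<in> Cop m. S \<subseteq> G}" using fin_Cop by simp
  have "card {S \<in> Cop m. S \<subseteq> G} choose r = card {R. R \<subseteq> {S \<in> Cop m. S \<subseteq> G} \<and> card R = r}"
    using n_subsets[OF finX] by simp
  also have "{R. R \<subseteq> {S \<in> Cop m. S \<subseteq> G} \<and> card R = r} = {R \<in> Rr m r. ER R \<subseteq> G}"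
    by (auto simp: Rr_def ER_def)
  finally have "real (card {S \<in> Cop m. S \<subseteq> G} choose r) = real (card {R \<in> Rr m r. ER R \<subseteq> G})" by simp
  also have "\<dots> = (\<Sum>R\<in>{R \<in> Rr m r. ER R \<subseteq> G}. 1)" by simp
  also have "\<dots> = (\<Sum>R\<in>Rr m r. if ER R \<subseteq> G then 1 else 0)"
    by (rule sum.inter_filter[OF fin_Rr])
  finally show ?thesis .
qed

lemma moment_identity:
  assumes p: "0 \<le> p" "p \<le> 1"
  shows "(\<Sum>G\<in>Pow (all_pairs m). pmf (gnp m p) G * real (card {S \<in> Cop m. S \<subseteq> G} choose r))
       = (\<Sum>R\<in>Rr m r. p ^ card (ER R))"
proof -
  have "(\<Sum>G\<in>Pow (all_pairs m). pmf (gnp m p) G * real (card {S \<in> Cop m. S \<subseteq> G} choose r))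
      = (\<Sum>G\<in>Pow (all_pairs m). \<Sum>R\<in>Rr m r. pmf (gnp m p) G * (if ER R \<subseteq> G then 1 else 0))"
    by (simp add: choose_eq sum_distrib_left)
  also have "\<dots> = (\<Sum>R\<in>Rr m r. \<Sum>G\<in>Pow (all_pairs m). pmf (gnp m p) G * (if ER R \<subseteq> G then 1 else 0))"
    by (rule sum.swap)
  also have "\<dots> = (\<Sum>R\<in>Rr m r. p ^ card (ER R))"
  proof (rule sum.cong[OF refl])
    fix R assume "R \<in> Rr m r"
    then have "ER R \<subseteq> all_pairs m" using Cop_props(4) by (auto simp: Rr_def ER_def)
    then show "(\<Sum>G\<in>Pow (all_pairs m). pmf (gnp m p) G * (if ER R \<subseteq> G then 1 else 0)) = p ^ card (ER R)"
      by (simp only: sum_gnp_indicator prob_gnp[OF p])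
  qed
  finally show ?thesis .
qed

end


lemma choose_le_pow': "n choose r \<le> n ^ r"
  by (cases "r \<le> n") (auto simp: binomial_le_pow binomial_eq_0)

lemma pow_le_powr:
  fixes x k a :: real
  assumes x: "0 \<le> x" "x \<le> 1" and k: "k > 0" and a: "a > 0" and N: "k * a \<le> real N"
  shows "x ^ N \<le> (x powr k) powr a"
proof (cases "x = 0")
  case True
  have "N > 0" using N k a by (metis mult_pos_pos not_gr_zero of_nat_0 verit_comp_simplify1(3))
  then show ?thesis using True by (simp add: power_0_left)
next
  case False
  then have xp: "x > 0" using x by simp
  have "x ^ N = x powr real N" using xp by (simp add: powr_realpow)
  also have "\<dots> \<le> x powr (k * a)" using xp x(2) N by (intro powr_mono') auto
  also have "\<dots> = (x powr k) powr a" by (simp add: powr_powr)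
  finally show ?thesis .
qed

lemma powr_add_nat:
  fixes q d :: real
  assumes "q \<ge> 0"
  shows "q powr (real t + d) = q ^ t * q powr d"
proof (cases "q = 0")
  case True then show ?thesis by simp
next
  case False then show ?thesis using assms by (simp add: powr_add powr_realpow)
qed

locale SBP = SB V E for V :: "'a set" and E +
  fixes p :: "nat \<Rightarrow> real" and c :: real
  assumes p_prob: "\<And>m. 0 \<le> p m \<and> p m \<le> 1"
    and c_pos: "c > 0"
    and p_lim: "(\<lambda>m. real m * p m powr kk) \<longlonglongrightarrow> c"
begin

definition "q m = p m powr kk"
definition "mu = c ^ vv / real aut"

lemma q_nonneg: "q m \<ge> 0" by (simp add: q_def)
lemma q_le1: "q m \<le> 1"
proof -
  have "p m powr kk \<le> 1 powr kk" using p_prob[of m] kk_pos by (intro powr_mono2) auto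
  then show ?thesis by (simp add: q_def)
qed
lemma mq_lim: "(\<lambda>m. real m * q m) \<longlonglongrightarrow> c" using p_lim by (simp add: q_def)

lemma q_lim: "q \<longlonglongrightarrow> 0"
proof -
  have "(\<lambda>m. (real m * q m) * (1 / real m)) \<longlonglongrightarrow> c * 0"
    by (intro tendsto_intros mq_lim lim_const_over_n)
  moreover have "eventually (\<lambda>m. (real m * q m) * (1 / real m) = q m) sequentially"
    using eventually_gt_at_top[of 0] by eventually_elim simp
  ultimately show ?thesis by (simp add: tendsto_cong)
qed

lemma p_ee: "p m ^ ee = q m ^ vv"
proof (cases "p m = 0")
  case True then show ?thesis using ee_pos vv_pos by (simp add: q_def power_0_left)
next
  case False
  then have pp: "p m > 0" using p_prob[of m] by simp
  have "q m ^ vv = (p m powr kk) powr real vv" using pp by (simp add: q_def powr_realpow)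
  also have "\<dots> = p m powr (kk * real vv)" by (simp add: powr_powr)
  also have "kk * real vv = real ee" using ee_kk by simp
  finally show ?thesis using pp by (simp add: powr_realpow)
qed

lemma Inj_lim: "(\<lambda>m. real (card (Inj m)) * p m ^ ee) \<longlonglongrightarrow> c ^ vv"
proof -
  have "(\<lambda>m. \<Prod>i\<in>{0..<vv}. (real m - real i) * q m) \<longlonglongrightarrow> (\<Prod>i\<in>{0..<vv}. c)"
  proof (rule tendsto_prod)
    fix i :: nat
    have "(\<lambda>m. real m * q m - real i * q m) \<longlonglongrightarrow> c - real i * 0"
      by (intro tendsto_intros mq_lim q_lim)
    then show "(\<lambda>m. (real m - real i) * q m) \<longlonglongrightarrow> c" by (simp add: algebra_simps)
  qed
  moreover have "eventually (\<lambda>m. (\<Prod>i\<in>{0..<vv}. (real m - real i) * q m) = real (card (Inj m)) * p m ^ ee) sequentially"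
    using eventually_ge_at_top[of vv]
  proof eventually_elim
    case (elim m)
    have "real (card (Inj m)) = (\<Prod>i\<in>{0..<vv}. real (m - i))" by (simp add: card_Inj)
    also have "\<dots> = (\<Prod>i\<in>{0..<vv}. real m - real i)"
      using elim by (intro prod.cong refl) (simp add: of_nat_diff)
    finally show ?case by (simp add: p_ee prod.distrib)
  qed
  ultimately show ?thesis by (simp add: tendsto_cong)
qed

lemma pee_lim: "(\<lambda>m. p m ^ ee) \<longlonglongrightarrow> 0"
proof -
  have a: "(\<lambda>m. q m ^ vv) \<longlonglongrightarrow> 0 ^ vv" by (intro tendsto_intros q_lim)
  have z: "0 ^ vv = (0::real)" using vv_pos by (simp add: power_0_left)
  show ?thesis using a unfolding p_ee z .
qed

lemma Ncop_lim: "(\<lambda>m. real (card (Cop m)) * p m ^ ee) \<longlonglongrightarrow> mu"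
proof -
  have "(\<lambda>m. real (card (Inj m)) * p m ^ ee / real aut) \<longlonglongrightarrow> c ^ vv / real aut"
    by (intro tendsto_intros Inj_lim) (use aut_pos in auto)
  moreover have "real (card (Inj m)) * p m ^ ee / real aut = real (card (Cop m)) * p m ^ ee" for m
  proof -
    have "real (card (Inj m)) = real aut * real (card (Cop m))" using card_Cop[of m] by (metis of_nat_mult)
    then show ?thesis using aut_pos by simp
  qed
  ultimately show ?thesis by (simp add: mu_def)
qed

lemma main_term_lim: "(\<lambda>m. real (card (Rr m r)) * p m ^ (r * ee)) \<longlonglongrightarrow> mu ^ r / fact r"
proof -
  have "(\<lambda>m. (\<Prod>i\<in>{0..<r}. real (card (Cop m)) * p m ^ ee - real i * p m ^ ee) / fact r)
          \<longlonglongrightarrow> (\<Prod>i\<in>{0..<r}. mu - real i * 0) / fact r"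
    by (intro tendsto_intros Ncop_lim pee_lim) auto
  moreover have "real (card (Rr m r)) * p m ^ (r * ee) = (\<Prod>i\<in>{0..<r}. real (card (Cop m)) * p m ^ ee - real i * p m ^ ee) / fact r" for m
  proof -
    have "card (Rr m r) = card (Cop m) choose r"
      unfolding Rr_def using n_subsets[OF fin_Cop[of m], of r] by simp
    then have "real (card (Rr m r)) = (\<Prod>i\<in>{0..<r}. real (card (Cop m)) - real i) / fact r"
      by (simp add: binomial_gbinomial gbinomial_prod_rev)
    moreover have "p m ^ (r * ee) = (\<Prod>i\<in>{0..<r}. p m ^ ee)"
      by (simp add: power_mult[symmetric] mult.commute)
    moreover have "(\<Prod>i\<in>{0..<r}. (real (card (Cop m)) - real i) * p m ^ ee)
        = (\<Prod>i\<in>{0..<r}. real (card (Cop m)) - real i) * (\<Prod>i\<in>{0..<r}. p m ^ ee)"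
      by (rule prod.distrib)
    ultimately show ?thesis by (simp add: left_diff_distrib)
  qed
  ultimately show ?thesis by simp
qed

end


context SB begin

lemma CopIn_card:
  assumes "U \<subseteq> {..<m}" "finite U"
  shows "card {S \<in> Cop m. \<Union>S \<subseteq> U} \<le> card U ^ vv"
proof -
  have "{S \<in> Cop m. \<Union>S \<subseteq> U} \<subseteq> Phi ` (V \<rightarrow>\<^sub>E U)"
  proof
    fix S assume "S \<in> {S \<in> Cop m. \<Union>S \<subseteq> U}"
    then obtain f where f: "f \<in> Inj m" "S = Phi f" "\<Union>S \<subseteq> U" by (auto simp: Cop_def)
    then have "f ` V \<subseteq> U" using Union_Phi by metis
    moreover have "f \<in> extensional V" using f(1) by (auto simp: Inj_def PiE_def)
    ultimately have "f \<in> V \<rightarrow>\<^sub>E U" by (auto simp: PiE_def)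
    then show "S \<in> Phi ` (V \<rightarrow>\<^sub>E U)" using f(2) by blast
  qed
  moreover have "finite (V \<rightarrow>\<^sub>E U)" by (rule finite_PiE[OF finV]) (use assms(2) in auto)
  ultimately have "card {S \<in> Cop m. \<Union>S \<subseteq> U} \<le> card (Phi ` (V \<rightarrow>\<^sub>E U))"
    by (intro card_mono) auto
  also have "\<dots> \<le> card (V \<rightarrow>\<^sub>E U)" using \<open>finite (V \<rightarrow>\<^sub>E U)\<close> by (rule card_image_le)
  also have "\<dots> = card U ^ vv" using finV by (simp add: card_funcsetE vv_def)
  finally show ?thesis .
qed

lemma count_bound:
  "card {R \<in> Rr m r. card (WR R) = t} \<le> (m choose t) * (t ^ vv) ^ r"
proof -
  define Us where "Us = {U. U \<subseteq> {..<m} \<and> card U = t}"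
  define F where "F = (\<lambda>U. {R. R \<subseteq> {S \<in> Cop m. \<Union>S \<subseteq> U} \<and> card R = r})"
  have finUs: "finite Us"
  proof -
    have "Us \<subseteq> Pow {..<m}" by (auto simp: Us_def)
    then show ?thesis by (rule finite_subset) simp
  qed
  have sub: "{R \<in> Rr m r. card (WR R) = t} \<subseteq> (\<Union>U\<in>Us. F U)"
  proof
    fix R assume R: "R \<in> {R \<in> Rr m r. card (WR R) = t}"
    then have RC: "R \<subseteq> Cop m" and cR: "card R = r" and cW: "card (WR R) = t" by (auto simp: Rr_def)
    have "WR R \<in> Us" using WR_sub[OF RC] cW by (simp add: Us_def)
    moreover have "R \<in> F (WR R)" using RC cR by (auto simp: F_def WR_def)
    ultimately show "R \<in> (\<Union>U\<in>Us. F U)" by blast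
  qed
  have "card {R \<in> Rr m r. card (WR R) = t} \<le> card (\<Union>U\<in>Us. F U)"
  proof (rule card_mono[OF _ sub])
    show "finite (\<Union>U\<in>Us. F U)"
    proof (rule finite_UN_I[OF finUs])
      fix U assume "U \<in> Us"
      have "F U \<subseteq> Pow (Cop m)" by (auto simp: F_def)
      then show "finite (F U)" by (rule finite_subset) (simp add: fin_Cop)
    qed
  qed
  also have "\<dots> \<le> (\<Sum>U\<in>Us. card (F U))" by (rule card_UN_le[OF finUs])
  also have "\<dots> \<le> (\<Sum>U\<in>Us. (t ^ vv) ^ r)"
  proof (rule sum_mono)
    fix U assume U: "U \<in> Us"
    then have Um: "U \<subseteq> {..<m}" and cU: "card U = t" by (auto simp: Us_def)
    have finU: "finite U" using Um by (rule finite_subset) simp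
    have fC: "finite {S \<in> Cop m. \<Union>S \<subseteq> U}" using fin_Cop by simp
    have "card (F U) = card {S \<in> Cop m. \<Union>S \<subseteq> U} choose r"
      unfolding F_def by (rule n_subsets[OF fC])
    also have "\<dots> \<le> card {S \<in> Cop m. \<Union>S \<subseteq> U} ^ r" by (rule choose_le_pow')
    also have "\<dots> \<le> (t ^ vv) ^ r" using CopIn_card[OF Um finU] cU by (intro power_mono) auto
    finally show "card (F U) \<le> (t ^ vv) ^ r" .
  qed
  also have "\<dots> = card Us * (t ^ vv) ^ r" by simp
  also have "card Us = m choose t" unfolding Us_def using n_subsets[of "{..<m}" t] by simp
  finally show ?thesis .
qed

end

context SBP begin

definition ND :: "nat \<Rightarrow> nat \<Rightarrow> nat set set set set" where
  "ND m r = {R \<in> Rr m r. \<not> DisjF R}"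

definition Z :: "nat \<Rightarrow> nat \<Rightarrow> real" where
  "Z m r = (\<Sum>R\<in>ND m r. q m powr (real (card (WR R)) + delta))"

lemma fin_ND: "finite (ND m r)"
proof -
  have "ND m r \<subseteq> Rr m r" by (auto simp: ND_def)
  then show ?thesis using fin_Rr by (rule finite_subset)
qed

lemma ND_props:
  assumes "R \<in> ND m r"
  shows "kk * (real (card (WR R)) + delta) \<le> real (card (ER R))"
    and "real (card (WR R)) + delta \<le> real (r * vv)"
    and "card (WR R) \<le> r * vv"
proof -
  have RC: "R \<subseteq> Cop m" and cR: "card R = r" and nd: "\<not> DisjF R" using assms by (auto simp: ND_def Rr_def)
  have fR: "finite R" using RC fin_Cop finite_subset by auto
  show b: "kk * (real (card (WR R)) + delta) \<le> real (card (ER R))" by (rule nondisj_bound[OF fR RC nd])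
  have "card (ER R) \<le> r * ee" using ER_card_le[OF fR RC] cR by simp
  then have "real (card (ER R)) \<le> real r * real ee" by (metis of_nat_le_iff of_nat_mult)
  then have "real (card (ER R)) \<le> kk * real (r * vv)" using ee_kk by (simp add: mult_ac)
  then have "kk * (real (card (WR R)) + delta) \<le> kk * real (r * vv)" using b by linarith
  then show c: "real (card (WR R)) + delta \<le> real (r * vv)" using kk_pos by simp
  then show "card (WR R) \<le> r * vv" using delta_pos by linarith
qed

lemma err_bounds:
  assumes "R \<in> ND m r"
  shows "p m ^ card (ER R) \<le> q m powr (real (card (WR R)) + delta)"
    and "p m ^ (r * ee) \<le> q m powr (real (card (WR R)) + delta)"
proof -
  have a: "real (card (WR R)) + delta > 0" using delta_pos by simp
  show "p m ^ card (ER R) \<le> q m powr (real (card (WR R)) + delta)"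
    unfolding q_def using p_prob[of m] kk_pos a ND_props(1)[OF assms] by (intro pow_le_powr) auto
  have "kk * (real (card (WR R)) + delta) \<le> real (r * ee)"
    using ND_props(2)[OF assms] kk_pos ee_kk by (simp add: mult_left_mono mult_ac)
  then show "p m ^ (r * ee) \<le> q m powr (real (card (WR R)) + delta)"
    unfolding q_def using p_prob[of m] kk_pos a by (intro pow_le_powr) auto
qed

lemma Z_bound:
  "Z m r \<le> (\<Sum>t\<in>{..r * vv}. real ((t ^ vv) ^ r) * ((real m * q m) ^ t * q m powr delta))"
proof -
  define g where "g = (\<lambda>t::nat. q m powr (real t + delta))"
  have g0: "g t \<ge> 0" for t by (simp add: g_def)
  have "Z m r = (\<Sum>R\<in>ND m r. g (card (WR R)))" by (simp add: Z_def g_def)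
  also have "\<dots> = (\<Sum>t\<in>{..r * vv}. \<Sum>R\<in>{R \<in> ND m r. card (WR R) = t}. g (card (WR R)))"
    by (rule sum.group[symmetric]) (use fin_ND ND_props(3) in auto)
  also have "\<dots> = (\<Sum>t\<in>{..r * vv}. real (card {R \<in> ND m r. card (WR R) = t}) * g t)"
    by (intro sum.cong refl) simp
  also have "\<dots> \<le> (\<Sum>t\<in>{..r * vv}. real ((m choose t) * (t ^ vv) ^ r) * g t)"
  proof (intro sum_mono mult_right_mono g0)
    fix t
    have "card {R \<in> ND m r. card (WR R) = t} \<le> card {R \<in> Rr m r. card (WR R) = t}"
      by (intro card_mono) (auto simp: ND_def fin_Rr)
    also have "\<dots> \<le> (m choose t) * (t ^ vv) ^ r" by (rule count_bound)
    finally show "real (card {R \<in> ND m r. card (WR R) = t}) \<le> real ((m choose t) * (t ^ vv) ^ r)"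
      by (simp only: of_nat_le_iff)
  qed
  also have "\<dots> \<le> (\<Sum>t\<in>{..r * vv}. real (m ^ t * (t ^ vv) ^ r) * g t)"
  proof (intro sum_mono mult_right_mono g0)
    fix t
    have "(m choose t) * (t ^ vv) ^ r \<le> m ^ t * (t ^ vv) ^ r" by (intro mult_right_mono choose_le_pow') auto
    then show "real ((m choose t) * (t ^ vv) ^ r) \<le> real (m ^ t * (t ^ vv) ^ r)" by linarith
  qed
  also have "\<dots> = (\<Sum>t\<in>{..r * vv}. real ((t ^ vv) ^ r) * ((real m * q m) ^ t * q m powr delta))"
    by (intro sum.cong refl) (simp add: g_def powr_add_nat[OF q_nonneg] power_mult_distrib mult_ac)
  finally show ?thesis .
qed

lemma Z_nonneg: "Z m r \<ge> 0" by (simp add: Z_def sum_nonneg)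

lemma Z_lim: "(\<lambda>m. Z m r) \<longlonglongrightarrow> 0"
proof (rule tendsto_sandwich[OF _ _ tendsto_const])
  show "eventually (\<lambda>m. 0 \<le> Z m r) sequentially" by (simp add: Z_nonneg)
  show "eventually (\<lambda>m. Z m r \<le> (\<Sum>t\<in>{..r * vv}. real ((t ^ vv) ^ r) * ((real m * q m) ^ t * q m powr delta))) sequentially"
    by (intro always_eventually allI Z_bound)
  have qd: "(\<lambda>m. q m powr delta) \<longlonglongrightarrow> 0"
    by (rule tendsto_zero_powrI[OF q_lim tendsto_const]) (auto simp: q_nonneg delta_pos)
  have "(\<lambda>m. \<Sum>t\<in>{..r * vv}. real ((t ^ vv) ^ r) * ((real m * q m) ^ t * q m powr delta))
        \<longlonglongrightarrow> (\<Sum>t\<in>{..r * vv}. real ((t ^ vv) ^ r) * (c ^ t * 0))"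
    by (intro tendsto_intros mq_lim qd)
  then show "(\<lambda>m. \<Sum>t\<in>{..r * vv}. real ((t ^ vv) ^ r) * ((real m * q m) ^ t * q m powr delta)) \<longlonglongrightarrow> 0"
    by simp
qed

lemma moment_limit: "(\<lambda>m. \<Sum>R\<in>Rr m r. p m ^ card (ER R)) \<longlonglongrightarrow> mu ^ r / fact r"
proof -
  define e1 where "e1 = (\<lambda>m. \<Sum>R\<in>ND m r. p m ^ (r * ee))"
  define e2 where "e2 = (\<lambda>m. \<Sum>R\<in>ND m r. p m ^ card (ER R))"
  have dec: "(\<Sum>R\<in>Rr m r. p m ^ card (ER R)) = real (card (Rr m r)) * p m ^ (r * ee) - e1 m + e2 m" for m
  proof -
    have sub: "ND m r \<subseteq> Rr m r" by (auto simp: ND_def)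
    have "(\<Sum>R\<in>Rr m r. p m ^ card (ER R)) = (\<Sum>R\<in>Rr m r - ND m r. p m ^ card (ER R)) + e2 m"
      unfolding e2_def by (rule sum.subset_diff[OF sub fin_Rr])
    also have "(\<Sum>R\<in>Rr m r - ND m r. p m ^ card (ER R)) = (\<Sum>R\<in>Rr m r - ND m r. p m ^ (r * ee))"
    proof (rule sum.cong[OF refl])
      fix R assume "R \<in> Rr m r - ND m r"
      then have RC: "R \<subseteq> Cop m" "card R = r" "DisjF R" by (auto simp: ND_def Rr_def)
      have "finite R" using RC fin_Cop finite_subset by auto
      then show "p m ^ card (ER R) = p m ^ (r * ee)" using disj_card[of R m] RC by simp
    qed
    also have "\<dots> = real (card (Rr m r)) * p m ^ (r * ee) - e1 m"
      using sub fin_ND by (simp add: e1_def card_Diff_subset of_nat_diff card_mono fin_Rr left_diff_distrib)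
    finally show ?thesis .
  qed
  have e1lim: "e1 \<longlonglongrightarrow> 0"
  proof (rule tendsto_sandwich[OF _ _ tendsto_const Z_lim[of r]])
    show "eventually (\<lambda>m. 0 \<le> e1 m) sequentially" using p_prob by (simp add: e1_def sum_nonneg)
    show "eventually (\<lambda>m. e1 m \<le> Z m r) sequentially"
      unfolding e1_def Z_def by (intro always_eventually allI sum_mono err_bounds(2))
  qed
  have e2lim: "e2 \<longlonglongrightarrow> 0"
  proof (rule tendsto_sandwich[OF _ _ tendsto_const Z_lim[of r]])
    show "eventually (\<lambda>m. 0 \<le> e2 m) sequentially" using p_prob by (simp add: e2_def sum_nonneg)
    show "eventually (\<lambda>m. e2 m \<le> Z m r) sequentially"
      unfolding e2_def Z_def by (intro always_eventually allI sum_mono err_bounds(1))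
  qed
  have "(\<lambda>m. real (card (Rr m r)) * p m ^ (r * ee) - e1 m + e2 m) \<longlonglongrightarrow> mu ^ r / fact r - 0 + 0"
    by (intro tendsto_intros main_term_lim e1lim e2lim)
  then show ?thesis by (simp add: dec)
qed

end


lemma g_mono:
  fixes y h0 l1 l2 :: real
  assumes "l1 \<le> l2"
  shows "(y - h0) * exp (- l2 * (y - h0)) \<le> (y - h0) * exp (- l1 * (y - h0))"
proof (cases "y - h0 \<ge> 0")
  case True
  have "- l2 * (y - h0) \<le> - l1 * (y - h0)" using assms True by (simp add: mult_right_mono)
  then show ?thesis using True by (intro mult_left_mono) auto
next
  case False
  have "- l1 * (y - h0) \<le> - l2 * (y - h0)" using assms False by (simp add: mult_right_mono_neg)
  then show ?thesis using False by (intro mult_left_mono_neg) auto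
qed

lemma g_strict:
  fixes y h0 l1 l2 :: real
  assumes "l1 < l2" "y \<noteq> h0"
  shows "(y - h0) * exp (- l2 * (y - h0)) < (y - h0) * exp (- l1 * (y - h0))"
proof (cases "y - h0 > 0")
  case True
  have "- l2 * (y - h0) < - l1 * (y - h0)" using assms True by (simp add: mult_strict_right_mono)
  then show ?thesis using True by (intro mult_strict_left_mono) auto
next
  case False
  then have n: "y - h0 < 0" using assms by simp
  have "- l1 * (y - h0) < - l2 * (y - h0)" using assms n by (simp add: mult_strict_right_mono_neg)
  then show ?thesis using n by (intro mult_strict_left_mono_neg) auto
qed

lemma root_in:
  fixes A :: "'b set" and w y :: "'b \<Rightarrow> real" and h0 a b :: real
  assumes fin: "finite A" and w: "\<And>x. x \<in> A \<Longrightarrow> w x \<ge> 0" and ab: "a < b"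
    and Fa: "(\<Sum>x\<in>A. w x * ((y x - h0) * exp (- a * (y x - h0)))) > 0"
    and Fb: "(\<Sum>x\<in>A. w x * ((y x - h0) * exp (- b * (y x - h0)))) < 0"
  shows "(THE l. (\<Sum>x\<in>A. w x * ((y x - h0) * exp (- l * (y x - h0)))) = 0) \<in> {a<..<b}"
proof -
  define F where "F = (\<lambda>l. \<Sum>x\<in>A. w x * ((y x - h0) * exp (- l * (y x - h0))))"
  have mono: "F l2 \<le> F l1" if "l1 \<le> l2" for l1 l2
    unfolding F_def
  proof (rule sum_mono)
    fix x assume "x \<in> A"
    show "w x * ((y x - h0) * exp (- l2 * (y x - h0))) \<le> w x * ((y x - h0) * exp (- l1 * (y x - h0)))"
      by (rule mult_left_mono[OF g_mono[OF that] w[OF \<open>x \<in> A\<close>]])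
  qed
  have cont: "isCont F x" for x unfolding F_def by (intro continuous_intros)
  have Fa': "F a > 0" using Fa by (simp add: F_def)
  have Fb': "F b < 0" using Fb by (simp add: F_def)
  obtain x0 where x0: "a \<le> x0" "x0 \<le> b" "F x0 = 0"
    using IVT2[of F b 0 a] Fa' Fb' ab cont by auto
  have "x0 \<noteq> a" using x0(3) Fa' by auto
  moreover have "x0 \<noteq> b" using x0(3) Fb' by auto
  ultimately have x0ab: "x0 \<in> {a<..<b}" using x0(1,2) by auto
  have uniq: "l = x0" if Fl: "F l = 0" for l
  proof (rule ccontr)
    assume lx: "l \<noteq> x0"
    have "\<exists>l1 l2. l1 < l2 \<and> F l1 = 0 \<and> F l2 = 0"
    proof (cases "l < x0")
      case True then show ?thesis using Fl x0(3) by blast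
    next
      case False then have "x0 < l" using lx by simp
      then show ?thesis using Fl x0(3) by blast
    qed
    then obtain l1 l2 where l12: "l1 < l2" "F l1 = 0" "F l2 = 0" by blast
    define D where "D = (\<lambda>x. w x * ((y x - h0) * exp (- l1 * (y x - h0))) - w x * ((y x - h0) * exp (- l2 * (y x - h0))))"
    have S0: "sum D A = 0"
      using l12 by (simp add: F_def D_def sum_subtractf)
    have nn: "D x \<ge> 0" if xA: "x \<in> A" for x
    proof -
      have "w x * ((y x - h0) * exp (- l2 * (y x - h0))) \<le> w x * ((y x - h0) * exp (- l1 * (y x - h0)))"
        using l12(1) by (intro mult_left_mono[OF g_mono w[OF xA]]) simp
      then show ?thesis by (simp add: D_def)
    qed
    have "w x * ((y x - h0) * exp (- b * (y x - h0))) = 0" if xA: "x \<in> A" for x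
    proof (cases "w x = 0")
      case True then show ?thesis by simp
    next
      case False
      have "y x = h0"
      proof (rule ccontr)
        assume "y x \<noteq> h0"
        then have "(y x - h0) * exp (- l2 * (y x - h0)) < (y x - h0) * exp (- l1 * (y x - h0))"
          by (rule g_strict[OF l12(1)])
        moreover have "w x > 0" using w[OF xA] False by simp
        ultimately have "w x * ((y x - h0) * exp (- l2 * (y x - h0))) < w x * ((y x - h0) * exp (- l1 * (y x - h0)))"
          by (rule mult_strict_left_mono)
        then have pos: "D x > 0" by (simp add: D_def)
        have "D x \<le> sum D A" by (rule member_le_sum[OF xA nn fin]) auto
        then show False using pos S0 by simp
      qed
      then show ?thesis by simp
    qed
    then have "F b = 0" unfolding F_def by (intro sum.neutral ballI)
    then show False using Fb' by simp
  qed
  have "(THE l. F l = 0) = x0"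
  proof (rule the_equality)
    show "F x0 = 0" by (rule x0(3))
    fix l assume "F l = 0" then show "l = x0" by (rule uniq)
  qed
  then show ?thesis using x0ab unfolding F_def by simp
qed

lemma quad_lower:
  fixes y h0 e :: real
  assumes y: "y \<ge> - h0" and h0: "h0 > 0" and e: "e > 0" "e * h0 \<le> 1"
  shows "y * exp (e * y) \<ge> y + e / 2 * y ^ 2"
proof (cases "y \<ge> 0")
  case True
  have "y * (1 + e * y) \<le> y * exp (e * y)" using True by (intro mult_left_mono) auto
  moreover have "y + e / 2 * y ^ 2 \<le> y * (1 + e * y)" using True e by (simp add: power2_eq_square algebra_simps)
  ultimately show ?thesis by linarith
next
  case False
  then have yn: "y < 0" by simp
  define z where "z = - e * y"
  have z0: "z > 0" using yn e by (simp add: z_def mult_pos_neg)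
  have z1: "z \<le> 1"
  proof -
    have "- y \<le> h0" using y by simp
    then have "e * (- y) \<le> e * h0" using e by (intro mult_left_mono) auto
    then show ?thesis using e by (simp add: z_def)
  qed
  have "exp (e * y) * exp z = 1" by (simp add: z_def flip: exp_add)
  moreover have "1 + z \<le> exp z" by simp
  ultimately have "exp (e * y) * (1 + z) \<le> 1"
    by (metis exp_ge_zero mult_left_mono)
  then have ex: "exp (e * y) \<le> 1 / (1 + z)" using z0 by (simp add: field_simps)
  have "y / (1 + z) \<le> y * exp (e * y)"
  proof -
    have "y * (1 / (1 + z)) \<le> y * exp (e * y)" using ex yn by (intro mult_left_mono_neg) auto
    then show ?thesis by simp
  qed
  moreover have "y + e / 2 * y ^ 2 \<le> y / (1 + z)"
  proof -
    define a where "a = e / 2 * y ^ 2"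
    have k: "a * (1 - z) \<ge> 0" using z1 e by (simp add: a_def)
    have yz: "y * z = - 2 * a" by (simp add: z_def a_def power2_eq_square)
    have "(y + a) * (1 + z) = y + y * z + a + a * z" by (simp add: distrib_left distrib_right)
    also have "\<dots> = y - 2 * a + a + a * z" using yz by simp
    also have "\<dots> = y - a * (1 - z)" by (simp add: algebra_simps)
    also have "\<dots> \<le> y" using k by simp
    finally have "(y + e / 2 * y ^ 2) * (1 + z) \<le> y" by (simp add: a_def)
    then show ?thesis using z0 by (simp add: field_simps)
  qed
  ultimately show ?thesis by linarith
qed

lemma sq_choose: "real n ^ 2 = 2 * real (n choose 2) + real n"
proof (induction n)
  case 0 then show ?case by simp
next
  case (Suc n)
  have "Suc n choose 2 = n + (n choose 2)"
    by (simp add: numeral_2_eq_2)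
  then show ?case using Suc by (simp add: power2_eq_square algebra_simps)
qed


locale SBPH = SBP V E p c for V :: "'a set" and E p c +
  fixes h0 :: real
  assumes h0_pos: "h0 > 0" and mu_ge: "mu \<ge> h0"
begin

definition Yc :: "nat \<Rightarrow> nat set set \<Rightarrow> nat" where "Yc m G = card {S \<in> Cop m. S \<subseteq> G}"
definition AA :: "nat \<Rightarrow> nat set set set" where "AA m = Pow (all_pairs m)"
definition fm :: "nat \<Rightarrow> real \<Rightarrow> real" where
  "fm m l = (\<Sum>G\<in>AA m. pmf (gnp m (p m)) G * ((real (Yc m G) - h0) * exp (- l * (real (Yc m G) - h0))))"

lemma mu_pos: "mu > 0" using mu_ge h0_pos by simp

lemma fin_AA: "finite (AA m)" by (simp add: AA_def fin_AP)

lemma expect_eq: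
  "measure_pmf.expectation (gnp m (p m)) (\<lambda>G. (copies V E m G - h0) * exp (- l * (copies V E m G - h0))) = fm m l"
  unfolding fm_def copies_eq Yc_def
  by (subst integral_measure_pmf[OF fin_AA]) (use set_gnp in \<open>auto simp: AA_def\<close>)

lemma mom: "(\<lambda>m. \<Sum>G\<in>AA m. pmf (gnp m (p m)) G * real (Yc m G choose r)) \<longlonglongrightarrow> mu ^ r / fact r"
proof -
  have "(\<Sum>G\<in>AA m. pmf (gnp m (p m)) G * real (Yc m G choose r)) = (\<Sum>R\<in>Rr m r. p m ^ card (ER R))" for m
    unfolding AA_def Yc_def using p_prob[of m] by (intro moment_identity) auto
  then show ?thesis using moment_limit[of r] by simp
qed

lemma wsum1: "(\<Sum>G\<in>AA m. pmf (gnp m (p m)) G) = 1"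
  unfolding AA_def by (rule sum_pmf_eq_1[OF _ set_gnp]) (simp add: fin_AP)

lemma term_form:
  "(real n - h0) * exp (- l * (real n - h0)) = exp (l * h0) * (real n * exp (- l) ^ n - h0 * exp (- l) ^ n)"
proof -
  have "exp (- l * (real n - h0)) = exp (l * h0) * exp (- l) ^ n"
    by (simp add: exp_of_nat_mult[symmetric] algebra_simps flip: exp_add)
  then show ?thesis by (simp add: algebra_simps)
qed

lemma fm_form:
  "fm m l = exp (l * h0) * ((\<Sum>G\<in>AA m. pmf (gnp m (p m)) G * (real (Yc m G) * exp (- l) ^ Yc m G))
       - h0 * (\<Sum>G\<in>AA m. pmf (gnp m (p m)) G * exp (- l) ^ Yc m G))"
  unfolding fm_def term_form
  by (simp add: sum_distrib_left sum_subtractf algebra_simps)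

lemma fm_lim:
  assumes "l \<ge> 0"
  shows "(\<lambda>m. fm m l) \<longlonglongrightarrow> exp (l * h0) * (mu * exp (- l) * exp (mu * (exp (- l) - 1)) - h0 * exp (mu * (exp (- l) - 1)))"
proof -
  have s: "0 \<le> exp (- l)" "exp (- l) \<le> 1" using assms by auto
  note gl = gen_fun_limit[of AA "\<lambda>m G. pmf (gnp m (p m)) G" Yc mu "exp (- l)", OF fin_AA pmf_nonneg mom s]
  show ?thesis unfolding fm_form by (intro tendsto_intros gl)
qed

lemma lim_sign:
  "exp (l * h0) * (mu * exp (- l) * exp (mu * (exp (- l) - 1)) - h0 * exp (mu * (exp (- l) - 1)))
   = exp (l * h0) * exp (mu * (exp (- l) - 1)) * h0 * (exp (ln (mu / h0) - l) - 1)"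
proof -
  have "exp (ln (mu / h0) - l) = mu / h0 * exp (- l)"
    using mu_pos h0_pos by (simp add: exp_diff exp_minus field_simps)
  then have "mu * exp (- l) = h0 * exp (ln (mu / h0) - l)"
    using h0_pos by simp
  then show ?thesis by (simp add: algebra_simps)
qed

lemma LB_lim:
  fixes e :: real
  shows "(\<lambda>m. \<Sum>G\<in>AA m. pmf (gnp m (p m)) G * ((real (Yc m G) - h0) + e / 2 * (real (Yc m G) - h0) ^ 2))
         \<longlonglongrightarrow> (mu - h0) + e / 2 * (mu ^ 2 + mu - 2 * h0 * mu + h0 ^ 2)"
proof -
  define M0 where "M0 = (\<lambda>m. \<Sum>G\<in>AA m. pmf (gnp m (p m)) G)"
  define M1 where "M1 = (\<lambda>m. \<Sum>G\<in>AA m. pmf (gnp m (p m)) G * real (Yc m G choose 1))"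
  define M2 where "M2 = (\<lambda>m. \<Sum>G\<in>AA m. pmf (gnp m (p m)) G * real (Yc m G choose 2))"
  have eq: "(\<Sum>G\<in>AA m. pmf (gnp m (p m)) G * ((real (Yc m G) - h0) + e / 2 * (real (Yc m G) - h0) ^ 2))
      = (1 - e * h0) * M1 m + e * M2 m + (e / 2 * h0 ^ 2 - h0) * M0 m + e / 2 * M1 m" for m
  proof -
    have t: "(real n - h0) + e / 2 * (real n - h0) ^ 2
          = (1 - e * h0) * real (n choose 1) + e * real (n choose 2) + (e / 2 * h0 ^ 2 - h0) + e / 2 * real (n choose 1)" for n
    proof -
      have "(real n - h0) + e / 2 * (real n - h0) ^ 2 = (real n - h0) + e / 2 * (real n ^ 2 - 2 * h0 * real n + h0 ^ 2)"
        by (simp add: power2_eq_square algebra_simps)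
      also have "\<dots> = (real n - h0) + e / 2 * ((2 * real (n choose 2) + real n) - 2 * h0 * real n + h0 ^ 2)"
        by (simp only: sq_choose)
      also have "\<dots> = (1 - e * h0) * real (n choose 1) + e * real (n choose 2) + (e / 2 * h0 ^ 2 - h0) + e / 2 * real (n choose 1)"
        by (simp add: algebra_simps)
      finally show ?thesis .
    qed
    have "(\<Sum>G\<in>AA m. pmf (gnp m (p m)) G * ((real (Yc m G) - h0) + e / 2 * (real (Yc m G) - h0) ^ 2))
        = (\<Sum>G\<in>AA m. (1 - e * h0) * (pmf (gnp m (p m)) G * real (Yc m G choose 1)) + e * (pmf (gnp m (p m)) G * real (Yc m G choose 2))
             + (e / 2 * h0 ^ 2 - h0) * pmf (gnp m (p m)) G + e / 2 * (pmf (gnp m (p m)) G * real (Yc m G choose 1)))"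
      unfolding t by (intro sum.cong refl) (simp add: algebra_simps)
    also have "\<dots> = (1 - e * h0) * M1 m + e * M2 m + (e / 2 * h0 ^ 2 - h0) * M0 m + e / 2 * M1 m"
      unfolding M0_def M1_def M2_def by (simp only: sum.distrib sum_distrib_left[symmetric])
    finally show ?thesis .
  qed
  have lim: "(\<lambda>m. (1 - e * h0) * M1 m + e * M2 m + (e / 2 * h0 ^ 2 - h0) * M0 m + e / 2 * M1 m)
        \<longlonglongrightarrow> (1 - e * h0) * (mu ^ 1 / fact 1) + e * (mu ^ 2 / fact 2) + (e / 2 * h0 ^ 2 - h0) * 1 + e / 2 * (mu ^ 1 / fact 1)"
    unfolding M1_def M2_def M0_def wsum1 by (intro tendsto_intros mom)
  have eqv: "(1 - e * h0) * (mu ^ 1 / fact 1) + e * (mu ^ 2 / fact 2) + (e / 2 * h0 ^ 2 - h0) * 1 + e / 2 * (mu ^ 1 / fact 1)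
      = (mu - h0) + e / 2 * (mu ^ 2 + mu - 2 * h0 * mu + h0 ^ 2)"
    by (simp add: fact_numeral algebra_simps power2_eq_square)
  show ?thesis unfolding eq using lim unfolding eqv .
qed

lemma fm_ge_LB:
  assumes e: "e > 0" "e * h0 \<le> 1"
  shows "fm m (- e) \<ge> (\<Sum>G\<in>AA m. pmf (gnp m (p m)) G * ((real (Yc m G) - h0) + e / 2 * (real (Yc m G) - h0) ^ 2))"
  unfolding fm_def
proof (rule sum_mono)
  fix G assume "G \<in> AA m"
  have "(real (Yc m G) - h0) + e / 2 * (real (Yc m G) - h0) ^ 2 \<le> (real (Yc m G) - h0) * exp (e * (real (Yc m G) - h0))"
    using h0_pos e by (intro quad_lower) auto
  then show "pmf (gnp m (p m)) G * ((real (Yc m G) - h0) + e / 2 * (real (Yc m G) - h0) ^ 2)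
      \<le> pmf (gnp m (p m)) G * ((real (Yc m G) - h0) * exp (- (- e) * (real (Yc m G) - h0)))"
    by (intro mult_left_mono) auto
qed

lemma main: "(\<lambda>m. THE l. fm m l = 0) \<longlonglongrightarrow> ln (mu / h0)"
proof (rule tendstoI)
  fix eps :: real assume eps: "eps > 0"
  define l0 where "l0 = ln (mu / h0)"
  have l0: "l0 \<ge> 0" using mu_ge h0_pos by (simp add: l0_def)
  define b where "b = l0 + eps / 2"
  have evb: "eventually (\<lambda>m. fm m b < 0) sequentially"
  proof (rule order_tendstoD(2)[OF fm_lim])
    show "b \<ge> 0" using l0 eps by (simp add: b_def)
    have "exp (l0 - b) < 1" using eps by (simp add: b_def)
    then show "exp (b * h0) * (mu * exp (- b) * exp (mu * (exp (- b) - 1)) - h0 * exp (mu * (exp (- b) - 1))) < 0"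
      unfolding lim_sign l0_def[symmetric] using h0_pos by (simp add: mult_pos_neg)
  qed
  obtain a where a: "l0 - eps < a" "a < l0" and eva: "eventually (\<lambda>m. fm m a > 0) sequentially"
  proof (cases "l0 > 0")
    case True
    define a where "a = l0 - min eps l0 / 2"
    have a0: "a \<ge> 0" using True by (simp add: a_def)
    have "eventually (\<lambda>m. fm m a > 0) sequentially"
    proof (rule order_tendstoD(1)[OF fm_lim[OF a0]])
      have "exp (l0 - a) > 1" using True eps by (simp add: a_def)
      then show "0 < exp (a * h0) * (mu * exp (- a) * exp (mu * (exp (- a) - 1)) - h0 * exp (mu * (exp (- a) - 1)))"
        unfolding lim_sign l0_def[symmetric] using h0_pos by simp
    qed
    moreover have "l0 - eps < a" "a < l0" using True eps by (auto simp: a_def)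
    ultimately show ?thesis using that by blast
  next
    case False
    then have l00: "l0 = 0" using l0 by simp
    have "mu / h0 > 0" using mu_pos h0_pos by simp
    then have "mu / h0 = 1" using l00 unfolding l0_def by (simp add: ln_eq_zero_iff)
    then have muh: "mu = h0" using h0_pos by (simp add: field_simps)
    define e where "e = min (eps / 2) (1 / h0)"
    have e: "e > 0" "e * h0 \<le> 1" using eps h0_pos by (auto simp: e_def min_def field_simps)
    have "eventually (\<lambda>m. (\<Sum>G\<in>AA m. pmf (gnp m (p m)) G * ((real (Yc m G) - h0) + e / 2 * (real (Yc m G) - h0) ^ 2)) > 0) sequentially"
    proof (rule order_tendstoD(1)[OF LB_lim])
      show "0 < (mu - h0) + e / 2 * (mu ^ 2 + mu - 2 * h0 * mu + h0 ^ 2)"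
        using muh e mu_pos by (simp add: power2_eq_square)
    qed
    then have "eventually (\<lambda>m. fm m (- e) > 0) sequentially"
    proof eventually_elim
      case (elim m) then show ?case using fm_ge_LB[OF e, of m] by linarith
    qed
    moreover have "l0 - eps < - e" "- e < l0" using l00 e eps by (auto simp: e_def)
    ultimately show ?thesis using that by blast
  qed
  have ab: "a < b" using a eps by (simp add: b_def)
  from eva evb show "eventually (\<lambda>m. dist (THE l. fm m l = 0) (ln (mu / h0)) < eps) sequentially"
  proof eventually_elim
    case (elim m)
    have "(THE l. fm m l = 0) \<in> {a<..<b}"
      unfolding fm_def by (rule root_in[OF fin_AA pmf_nonneg ab]) (use elim in \<open>simp_all add: fm_def\<close>)
    then show ?case using a eps by (auto simp: dist_real_def b_def l0_def abs_less_iff)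
  qed
qed

lemma poisson_the:
  "(THE l. measure_pmf.expectation (poisson_pmf mu) (\<lambda>z. (real z - h0) * exp (- l * (real z - h0))) = 0) = ln (mu / h0)"
proof (rule the_equality)
  have E: "measure_pmf.expectation (poisson_pmf mu) (\<lambda>z. (real z - h0) * exp (- l * (real z - h0)))
       = exp (l * h0) * exp (- mu) * exp (mu * exp (- l)) * (mu * exp (- l) - h0)" for l
    unfolding poisson_expect[OF mu_pos] by (simp add: algebra_simps)
  have key: "mu * exp (- l) = h0 \<longleftrightarrow> l = ln (mu / h0)" for l
  proof -
    have "mu * exp (- l) = h0 \<longleftrightarrow> exp (- l) = h0 / mu" using mu_pos by (auto simp: field_simps)
    also have "\<dots> \<longleftrightarrow> - l = ln (h0 / mu)" using mu_pos h0_pos by (metis exp_ln ln_exp zero_less_divide_iff)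
    also have "\<dots> \<longleftrightarrow> l = ln (mu / h0)" using mu_pos h0_pos by (auto simp: ln_div)
    finally show ?thesis .
  qed
  show "measure_pmf.expectation (poisson_pmf mu) (\<lambda>z. (real z - h0) * exp (- ln (mu / h0) * (real z - h0))) = 0"
    unfolding E using key[of "ln (mu / h0)"] by simp
  fix l assume "measure_pmf.expectation (poisson_pmf mu) (\<lambda>z. (real z - h0) * exp (- l * (real z - h0))) = 0"
  then have "mu * exp (- l) - h0 = 0" unfolding E by simp
  then show "l = ln (mu / h0)" using key by simp
qed

end

theorem mainTheorem3:
  fixes V :: "'a set" and E :: "'a set set"
    and p :: "nat \<Rightarrow> real" and c h0 :: real
  assumes H: "simple_graph V E" and nonempty_edges: "E \<noteq> {}"
    and sb: "strictly_balanced V E"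
    and c_pos: "c > 0" and h0_pos: "h0 > 0"
    and p_prob: "\<And>m. 0 \<le> p m \<and> p m \<le> 1"
    and p_lim: "(\<lambda>m. real m * p m powr max_density V E) \<longlonglongrightarrow> c"
    and mu_ge: "c ^ card V / real (card (automorphisms V E)) \<ge> h0"
  shows "(\<lambda>m. (THE l. measure_pmf.expectation (gnp m (p m))
                  (\<lambda>G. (copies V E m G - h0) * exp (- l * (copies V E m G - h0))) = 0))
         \<longlonglongrightarrow>
         (THE l. measure_pmf.expectation
                  (poisson_pmf (c ^ card V / real (card (automorphisms V E))))
                  (\<lambda>z. (real z - h0) * exp (- l * (real z - h0))) = 0)"
proof -
  interpret SB V E by unfold_locales (fact H nonempty_edges sb)+
  have pl: "(\<lambda>m. real m * p m powr kk) \<longlonglongrightarrow> c" using p_lim max_density_eq by simp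
  interpret SBP V E p c by unfold_locales (use p_prob c_pos pl in auto)
  have mu_eq: "c ^ card V / real (card (automorphisms V E)) = mu" by (simp add: mu_def vv_def aut_def)
  interpret SBPH V E p c h0 by unfold_locales (use h0_pos mu_ge mu_eq in auto)
  have lhs: "(\<lambda>m. (THE l. measure_pmf.expectation (gnp m (p m))
                  (\<lambda>G. (copies V E m G - h0) * exp (- l * (copies V E m G - h0))) = 0))
           = (\<lambda>m. THE l. fm m l = 0)" by (simp only: expect_eq)
  show ?thesis unfolding lhs mu_eq poisson_the by (rule main)
qed


end
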